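(* Let $H$ be a Hilbert space, $A,B$ strictly positive bounded operators on $H$, $\lambda>0$, $\mu\in\mathbb{R}$ and $k\in\{0,1,2,\dots\}$. Then, in the operator order, (1) $S_{\mu-(k+1)\lambda}(A|B)\le \tilde T_{\mu,k+1,-\lambda}(A|B)\le S_{\mu-k\lambda}(A|B)$; (2) $S_{\mu+k\lambda}(A|B)\le \tilde T_{\mu,k+1,\lambda}(A|B)\le S_{\mu+(k+1)\lambda}(A|B)$.
   Context: A bounded operator $T$ on $H$ is strictly positive ($T>0$) if $(Tx,x)\ge0$ for all $x$ and $T$ is invertible; $X\le Y$ means $((Y-X)x,x)\ge 0$ for all $x$. Powers and $\log$ of strictly positive operators are defined by functional calculus. For $A>0$, $B>0$ and $\nu\in\mathbb{R}$: $A\natural_\nu B=A^{1/2}(A^{-1/2}BA^{-1/2})^{\nu}A^{1/2}$, and the generalized relative operator entropy is $S_\nu(A|B)=A^{1/2}(A^{-1/2}BA^{-1/2})^{\nu}(\log A^{-1/2}BA^{-1/2})A^{1/2}$. For $\lambda,\mu\in\mathbb{R}$, $\lambda\ne 0$, $k\in\mathbb{Z}$, the generalized Tsallis relative operator entropy is $\tilde T_{\mu,k,\lambda}(A|B)=\dfrac{A\natural_{\mu+k\lambda}B-A\natural_{\mu+(k-1)\lambda}B}{\lambda}$. *)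

theory Defs
  imports "HOL-Analysis.Analysis" "HOL-Computational_Algebra.Polynomial"
begin

(* Bounded operators on a real Hilbert space 'a (class real_inner + complete_space)
  are represented by the library type  'a \<Rightarrow>\<^sub>L 'a  (bounded linear functions). *)

definition op_invertible :: "('a::real_normed_vector \<Rightarrow>\<^sub>L 'a) \<Rightarrow> bool" where
  "op_invertible T \<longleftrightarrow> (\<exists>S. S o\<^sub>L T = id_blinfun \<and> T o\<^sub>L S = id_blinfun)"

definition self_adjoint :: "('a::real_inner \<Rightarrow>\<^sub>L 'a) \<Rightarrow> bool" where
  "self_adjoint T \<longleftrightarrow> (\<forall>x y. inner (T x) y = inner x (T y))"

definition op_le :: "('a::real_inner \<Rightarrow>\<^sub>L 'a) \<Rightarrow> ('a \<Rightarrow>\<^sub>L 'a) \<Rightarrow> bool" where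
  "op_le X Y \<longleftrightarrow> (\<forall>x. inner ((Y - X) x) x \<ge> 0)"

(* Strictly positive: positive, (self-adjoint, automatic over complex scalars) and invertible. *)
definition strictly_positive :: "('a::real_inner \<Rightarrow>\<^sub>L 'a) \<Rightarrow> bool" where
  "strictly_positive T \<longleftrightarrow> self_adjoint T \<and> (\<forall>x. inner (T x) x \<ge> 0) \<and> op_invertible T"

fun op_pow :: "('a::real_normed_vector \<Rightarrow>\<^sub>L 'a) \<Rightarrow> nat \<Rightarrow> ('a \<Rightarrow>\<^sub>L 'a)" where
  "op_pow T 0 = id_blinfun"
| "op_pow T (Suc n) = T o\<^sub>L op_pow T n"

definition poly_op :: "real poly \<Rightarrow> ('a::real_normed_vector \<Rightarrow>\<^sub>L 'a) \<Rightarrow> ('a \<Rightarrow>\<^sub>L 'a)" where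
  "poly_op p T = (\<Sum>i\<le>degree p. coeff p i *\<^sub>R op_pow T i)"

definition op_spectrum :: "('a::real_normed_vector \<Rightarrow>\<^sub>L 'a) \<Rightarrow> real set" where
  "op_spectrum T = {z. \<not> op_invertible (T - z *\<^sub>R id_blinfun)}"

(* Continuous functional calculus: f(T) is the norm limit of p(T) for polynomials p
  converging uniformly to f on the spectrum of T (Weierstrass construction). *)
definition cfc :: "(real \<Rightarrow> real) \<Rightarrow> ('a::real_normed_vector \<Rightarrow>\<^sub>L 'a) \<Rightarrow> ('a \<Rightarrow>\<^sub>L 'a)" where
  "cfc f T = (THE L. \<forall>\<epsilon>>0. \<exists>\<delta>>0. \<forall>p.
      (\<forall>t\<in>op_spectrum T. \<bar>f t - poly p t\<bar> < \<delta>) \<longrightarrow> norm (L - poly_op p T) < \<epsilon>)"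

definition op_powr :: "('a::real_normed_vector \<Rightarrow>\<^sub>L 'a) \<Rightarrow> real \<Rightarrow> ('a \<Rightarrow>\<^sub>L 'a)" where
  "op_powr T \<nu> = cfc (\<lambda>t. t powr \<nu>) T"

definition op_log :: "('a::real_normed_vector \<Rightarrow>\<^sub>L 'a) \<Rightarrow> ('a \<Rightarrow>\<^sub>L 'a)" where
  "op_log T = cfc ln T"

definition wmean :: "real \<Rightarrow> ('a::real_normed_vector \<Rightarrow>\<^sub>L 'a) \<Rightarrow> ('a \<Rightarrow>\<^sub>L 'a) \<Rightarrow> ('a \<Rightarrow>\<^sub>L 'a)" where
  "wmean \<nu> A B = (let C = op_powr A (-1/2) o\<^sub>L B o\<^sub>L op_powr A (-1/2)
                  in op_powr A (1/2) o\<^sub>L op_powr C \<nu> o\<^sub>L op_powr A (1/2))"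

definition rel_entropy :: "real \<Rightarrow> ('a::real_normed_vector \<Rightarrow>\<^sub>L 'a) \<Rightarrow> ('a \<Rightarrow>\<^sub>L 'a) \<Rightarrow> ('a \<Rightarrow>\<^sub>L 'a)" where
  "rel_entropy \<nu> A B = (let C = op_powr A (-1/2) o\<^sub>L B o\<^sub>L op_powr A (-1/2)
                  in op_powr A (1/2) o\<^sub>L op_powr C \<nu> o\<^sub>L op_log C o\<^sub>L op_powr A (1/2))"

definition tsallis :: "real \<Rightarrow> int \<Rightarrow> real \<Rightarrow> ('a::real_normed_vector \<Rightarrow>\<^sub>L 'a) \<Rightarrow> ('a \<Rightarrow>\<^sub>L 'a) \<Rightarrow> ('a \<Rightarrow>\<^sub>L 'a)" where
  "tsallis \<mu> k l A B = (1 / l) *\<^sub>R (wmean (\<mu> + of_int k * l) A B - wmean (\<mu> + of_int (k - 1) * l) A B)"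

end

theory Submission
  imports Defs "HOL-Computational_Algebra.Fundamental_Theorem_Algebra"
begin

lemma bl_compose_assoc: "(X o\<^sub>L Y) o\<^sub>L Z = X o\<^sub>L (Y o\<^sub>L Z)"
  by (rule blinfun_eqI) simp

lemma bl_compose_id_left[simp]: "id_blinfun o\<^sub>L X = X"
  by (rule blinfun_eqI) simp

lemma bl_compose_id_right[simp]: "X o\<^sub>L id_blinfun = X"
  by (rule blinfun_eqI) simp

lemmas blc = bounded_bilinear.add_left[OF bounded_bilinear_blinfun_compose]
  bounded_bilinear.add_right[OF bounded_bilinear_blinfun_compose]
  bounded_bilinear.diff_left[OF bounded_bilinear_blinfun_compose]
  bounded_bilinear.diff_right[OF bounded_bilinear_blinfun_compose]
  bounded_bilinear.scaleR_left[OF bounded_bilinear_blinfun_compose]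
  bounded_bilinear.scaleR_right[OF bounded_bilinear_blinfun_compose]
  bounded_bilinear.minus_left[OF bounded_bilinear_blinfun_compose]
  bounded_bilinear.minus_right[OF bounded_bilinear_blinfun_compose]

lemma poly_op_ext:
  assumes "degree p \<le> n"
  shows "poly_op p T = (\<Sum>i\<le>n. coeff p i *\<^sub>R op_pow T i)"
  unfolding poly_op_def
  by (rule sum.mono_neutral_left) (use assms in \<open>auto simp: coeff_eq_0\<close>)

lemma poly_op_add: "poly_op (p + q) T = poly_op p T + poly_op q T"
proof -
  let ?n = "max (degree p) (degree q)"
  have "poly_op (p + q) T = (\<Sum>i\<le>?n. coeff (p+q) i *\<^sub>R op_pow T i)"
    by (rule poly_op_ext) (simp add: degree_add_le)
  also have "\<dots> = (\<Sum>i\<le>?n. coeff p i *\<^sub>R op_pow T i) + (\<Sum>i\<le>?n. coeff q i *\<^sub>R op_pow T i)"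
    by (simp add: scaleR_add_left sum.distrib)
  also have "\<dots> = poly_op p T + poly_op q T"
    by (simp add: poly_op_ext[of p ?n T] poly_op_ext[of q ?n T])
  finally show ?thesis .
qed

lemma poly_op_smult: "poly_op (smult c p) T = c *\<^sub>R poly_op p T"
proof -
  have "poly_op (smult c p) T = (\<Sum>i\<le>degree p. coeff (smult c p) i *\<^sub>R op_pow T i)"
    by (rule poly_op_ext) (simp add: degree_smult_le)
  also have "\<dots> = c *\<^sub>R poly_op p T"
    by (simp add: poly_op_def scaleR_sum_right)
  finally show ?thesis .
qed

lemma poly_op_0[simp]: "poly_op 0 T = 0"
  by (simp add: poly_op_def)

lemma poly_op_const[simp]: "poly_op [:c:] T = c *\<^sub>R id_blinfun"
  by (simp add: poly_op_def)

lemma poly_op_pCons0: "poly_op (pCons 0 p) T = T o\<^sub>L poly_op p T"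
proof -
  have "poly_op (pCons 0 p) T = (\<Sum>i\<le>Suc (degree p). coeff (pCons 0 p) i *\<^sub>R op_pow T i)"
    by (rule poly_op_ext) (simp add: degree_pCons_le)
  also have "\<dots> = (\<Sum>i\<le>degree p. coeff p i *\<^sub>R op_pow T (Suc i))"
    by (subst sum.atMost_Suc_shift) simp
  also have "\<dots> = T o\<^sub>L poly_op p T"
    by (simp add: poly_op_def bounded_bilinear.sum_right[OF bounded_bilinear_blinfun_compose] blc)
  finally show ?thesis .
qed

lemma poly_op_pCons: "poly_op (pCons a p) T = a *\<^sub>R id_blinfun + (T o\<^sub>L poly_op p T)"
proof -
  have "poly_op (pCons a p) T = poly_op ([:a:] + pCons 0 p) T" by simp
  then show ?thesis by (simp only: poly_op_add poly_op_pCons0 poly_op_const)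
qed

lemma poly_op_mult: "poly_op (p * q) T = poly_op p T o\<^sub>L poly_op q T"
proof (induction p rule: pCons_induct)
  case 0 then show ?case by simp
next
  case (pCons a p)
  have "poly_op (pCons a p * q) T = a *\<^sub>R poly_op q T + (T o\<^sub>L (poly_op p T o\<^sub>L poly_op q T))"
    by (simp add: poly_op_add poly_op_smult poly_op_pCons0 pCons.IH)
  then show ?case by (simp add: poly_op_pCons blc bl_compose_assoc)
qed

lemma poly_op_minus: "poly_op (- p) T = - poly_op p T"
  using poly_op_smult[of "-1" p T] by simp

lemma poly_op_diff: "poly_op (p - q) T = poly_op p T - poly_op q T"
  using poly_op_add[of p "-q" T] by (simp add: poly_op_minus)

lemma poly_op_X: "poly_op [:0,1:] T = T"
  by (simp add: poly_op_pCons0)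

lemma poly_op_comm: "T o\<^sub>L poly_op p T = poly_op p T o\<^sub>L T"
  by (metis mult.commute poly_op_X poly_op_mult)

lemma sa_poly_op:
  assumes "self_adjoint T"
  shows "self_adjoint (poly_op p T)"
proof (induction p rule: pCons_induct)
  case 0 then show ?case by (simp add: self_adjoint_def)
next
  case (pCons a p)
  show ?case unfolding self_adjoint_def poly_op_pCons
  proof (intro allI)
    fix x y
    have "inner (T (poly_op p T x)) y = inner (poly_op p T x) (T y)"
      using assms by (simp add: self_adjoint_def)
    also have "\<dots> = inner x (poly_op p T (T y))"
      using pCons.IH by (simp add: self_adjoint_def)
    also have "\<dots> = inner x (T (poly_op p T y))"
      using poly_op_comm[of T p] by (metis blinfun_apply_blinfun_compose)
    finally show "inner ((a *\<^sub>R id_blinfun + (T o\<^sub>L poly_op p T)) x) y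
        = inner x ((a *\<^sub>R id_blinfun + (T o\<^sub>L poly_op p T)) y)"
      by (simp add: blinfun.bilinear_simps inner_add_left inner_add_right)
  qed
qed


lemma blinfun_Cauchy_convergent:
  fixes X :: "nat \<Rightarrow> 'a::real_normed_vector \<Rightarrow>\<^sub>L 'b::{real_normed_vector, complete_space}"
  assumes "Cauchy X"
  shows "convergent X"
proof -
  {
    fix x::'a
    {
      fix x::'a
      assume "norm x \<le> 1"
      have "Cauchy (\<lambda>n. X n x)"
      proof (rule CauchyI)
        fix e::real
        assume "0 < e"
        from CauchyD[OF \<open>Cauchy X\<close> \<open>0 < e\<close>] obtain M
          where M: "\<And>m n. m \<ge> M \<Longrightarrow> n \<ge> M \<Longrightarrow> norm (X m - X n) < e"
          by auto
        show "\<exists>M. \<forall>m\<ge>M. \<forall>n\<ge>M. norm (X m x - X n x) < e"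
        proof (safe intro!: exI[where x=M])
          fix m n
          assume le: "M \<le> m" "M \<le> n"
          have "norm (X m x - X n x) = norm ((X m - X n) x)"
            by (simp add: blinfun.bilinear_simps)
          also have "\<dots> \<le> norm (X m - X n) * norm x"
             by (rule norm_blinfun)
          also have "\<dots> \<le> norm (X m - X n) * 1"
            using \<open>norm x \<le> 1\<close> norm_ge_zero by (rule mult_left_mono)
          also have "\<dots> = norm (X m - X n)" by simp
          also have "\<dots> < e" using le by fact
          finally show "norm (X m x - X n x) < e" .
        qed
      qed
      hence "convergent (\<lambda>n. X n x)"
        by (metis Cauchy_convergent_iff)
    } note convergent_norm1 = this
    define y where "y = x /\<^sub>R norm x"
    have y: "norm y \<le> 1" and xy: "x = norm x *\<^sub>R y"
      by (simp_all add: y_def inverse_eq_divide)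
    have "convergent (\<lambda>n. norm x *\<^sub>R X n y)"
      by (intro bounded_bilinear.convergent[OF bounded_bilinear_scaleR] convergent_const
        convergent_norm1 y)
    also have "(\<lambda>n. norm x *\<^sub>R X n y) = (\<lambda>n. X n x)"
      by (subst xy) (simp add: blinfun.bilinear_simps)
    finally have "convergent (\<lambda>n. X n x)" .
  }
  then obtain v where v: "\<And>x. (\<lambda>n. X n x) \<longlonglongrightarrow> v x"
    unfolding convergent_def
    by metis

  have "Cauchy (\<lambda>n. norm (X n))"
  proof (rule CauchyI)
    fix e::real
    assume "e > 0"
    from CauchyD[OF \<open>Cauchy X\<close> \<open>0 < e\<close>] obtain M
      where M: "\<And>m n. m \<ge> M \<Longrightarrow> n \<ge> M \<Longrightarrow> norm (X m - X n) < e"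
      by auto
    show "\<exists>M. \<forall>m\<ge>M. \<forall>n\<ge>M. norm (norm (X m) - norm (X n)) < e"
    proof (safe intro!: exI[where x=M])
      fix m n assume mn: "m \<ge> M" "n \<ge> M"
      have "norm (norm (X m) - norm (X n)) \<le> norm (X m - X n)"
        by (metis norm_triangle_ineq3 real_norm_def)
      also have "\<dots> < e" using mn by fact
      finally show "norm (norm (X m) - norm (X n)) < e" .
    qed
  qed
  then obtain K where K: "(\<lambda>n. norm (X n)) \<longlonglongrightarrow> K"
    unfolding Cauchy_convergent_iff convergent_def
    by metis

  have "bounded_linear v"
  proof
    fix x y and r::real
    from tendsto_add[OF v[of x] v [of y]] v[of "x + y", unfolded blinfun.bilinear_simps]
      tendsto_scaleR[OF tendsto_const[of r] v[of x]] v[of "r *\<^sub>R x", unfolded blinfun.bilinear_simps]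
    show "v (x + y) = v x + v y" "v (r *\<^sub>R x) = r *\<^sub>R v x"
      by (metis (poly_guards_query) LIMSEQ_unique)+
    show "\<exists>K. \<forall>x. norm (v x) \<le> norm x * K"
    proof (safe intro!: exI[where x=K])
      fix x
      have "norm (v x) \<le> K * norm x"
        by (rule tendsto_le[OF _ tendsto_mult[OF K tendsto_const] tendsto_norm[OF v]])
          (auto simp: norm_blinfun)
      thus "norm (v x) \<le> norm x * K"
        by (simp add: ac_simps)
    qed
  qed
  hence Bv: "\<And>x. (\<lambda>n. X n x) \<longlonglongrightarrow> Blinfun v x"
    by (auto simp: bounded_linear_Blinfun_apply v)

  have "X \<longlonglongrightarrow> Blinfun v"
  proof (rule LIMSEQ_I)
    fix r::real assume "r > 0"
    define r' where "r' = r / 2"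
    have "0 < r'" "r' < r" using \<open>r > 0\<close> by (simp_all add: r'_def)
    from CauchyD[OF \<open>Cauchy X\<close> \<open>r' > 0\<close>]
    obtain M where M: "\<And>m n. m \<ge> M \<Longrightarrow> n \<ge> M \<Longrightarrow> norm (X m - X n) < r'"
      by metis
    show "\<exists>no. \<forall>n\<ge>no. norm (X n - Blinfun v) < r"
    proof (safe intro!: exI[where x=M])
      fix n assume n: "M \<le> n"
      have "norm (X n - Blinfun v) \<le> r'"
      proof (rule norm_blinfun_bound)
        fix x
        have "eventually (\<lambda>m. m \<ge> M) sequentially"
          by (metis eventually_ge_at_top)
        hence ev_le: "eventually (\<lambda>m. norm (X n x - X m x) \<le> r' * norm x) sequentially"
        proof eventually_elim
          case (elim m)
          have "norm (X n x - X m x) = norm ((X n - X m) x)"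
            by (simp add: blinfun.bilinear_simps)
          also have "\<dots> \<le> norm ((X n - X m)) * norm x"
            by (rule norm_blinfun)
          also have "\<dots> \<le> r' * norm x"
            using M[OF n elim] by (simp add: mult_right_mono)
          finally show ?case .
        qed
        have tendsto_v: "(\<lambda>m. norm (X n x - X m x)) \<longlonglongrightarrow> norm (X n x - Blinfun v x)"
          by (auto intro!: tendsto_intros Bv)
        show "norm ((X n - Blinfun v) x) \<le> r' * norm x"
          by (auto intro!: tendsto_upperbound tendsto_v ev_le simp: blinfun.bilinear_simps)
      qed (simp add: \<open>0 < r'\<close> less_imp_le)
      thus "norm (X n - Blinfun v) < r"
        by (metis \<open>r' < r\<close> le_less_trans)
    qed
  qed
  then show ?thesis by (rule convergentI)
qed

lemma summable_cmp:
  fixes f :: "nat \<Rightarrow> 'a::real_normed_vector \<Rightarrow>\<^sub>L 'b::{real_normed_vector, complete_space}"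
  assumes g: "summable g" and le: "\<And>n. norm (f n) \<le> g n"
  shows "summable f"
proof -
  have Cg: "Cauchy (\<lambda>n. \<Sum>i<n. g i)"
    using g by (simp add: summable_iff_convergent convergent_Cauchy)
  have key: "norm ((\<Sum>i<m. f i) - (\<Sum>i<n. f i)) \<le> \<bar>(\<Sum>i<m. g i) - (\<Sum>i<n. g i)\<bar>" for m n
  proof -
    have gen: "norm ((\<Sum>i<m. f i) - (\<Sum>i<n. f i)) \<le> \<bar>(\<Sum>i<m. g i) - (\<Sum>i<n. g i)\<bar>" if "n \<le> m" for m n
    proof -
      have "(\<Sum>i<m. f i) - (\<Sum>i<n. f i) = (\<Sum>i\<in>{n..<m}. f i)"
        using that by (metis sum_diff_nat_ivl lessThan_atLeast0 zero_le)
      moreover have "(\<Sum>i<m. g i) - (\<Sum>i<n. g i) = (\<Sum>i\<in>{n..<m}. g i)"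
        using that by (metis sum_diff_nat_ivl lessThan_atLeast0 zero_le)
      moreover have "norm (\<Sum>i\<in>{n..<m}. f i) \<le> (\<Sum>i\<in>{n..<m}. g i)"
        by (rule sum_norm_le) (rule le)
      ultimately show ?thesis by simp
    qed
    show ?thesis
    proof (cases "n \<le> m")
      case True then show ?thesis by (rule gen)
    next
      case False
      then have "norm ((\<Sum>i<n. f i) - (\<Sum>i<m. f i)) \<le> \<bar>(\<Sum>i<n. g i) - (\<Sum>i<m. g i)\<bar>" by (intro gen) simp
      then show ?thesis by (simp add: norm_minus_commute abs_minus_commute)
    qed
  qed
  have "Cauchy (\<lambda>n. \<Sum>i<n. f i)"
    unfolding Cauchy_iff
  proof (intro allI impI)
    fix e :: real assume "e > 0"
    then obtain M where M: "\<forall>m\<ge>M. \<forall>n\<ge>M. norm ((\<Sum>i<m. g i) - (\<Sum>i<n. g i)) < e"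
      using Cg unfolding Cauchy_iff by blast
    show "\<exists>M. \<forall>m\<ge>M. \<forall>n\<ge>M. norm ((\<Sum>i<m. f i) - (\<Sum>i<n. f i)) < e"
      using M key by (metis order.strict_trans1 real_norm_def)
  qed
  then show ?thesis by (simp add: summable_iff_convergent blinfun_Cauchy_convergent)
qed

lemma norm_op_pow: "norm (op_pow X n) \<le> norm X ^ n"
proof (induction n)
  case 0 then show ?case by (simp add: norm_blinfun_id_le)
next
  case (Suc n)
  have "norm (op_pow X (Suc n)) \<le> norm X * norm (op_pow X n)"
    by (simp add: norm_blinfun_compose)
  also have "\<dots> \<le> norm X * norm X ^ n"
    by (rule mult_left_mono[OF Suc.IH]) simp
  finally show ?case by simp
qed

lemma op_pow_Suc': "op_pow X (Suc n) = op_pow X n o\<^sub>L X"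
proof (induction n)
  case 0 then show ?case by simp
next
  case (Suc n)
  then show ?case by (metis op_pow.simps(2) bl_compose_assoc)
qed

lemma op_invertible_scale:
  assumes "op_invertible S" "c \<noteq> 0"
  shows "op_invertible (c *\<^sub>R S)"
proof -
  obtain R where R: "R o\<^sub>L S = id_blinfun" "S o\<^sub>L R = id_blinfun"
    using assms(1) unfolding op_invertible_def by blast
  show ?thesis unfolding op_invertible_def
    by (rule exI[of _ "(1/c) *\<^sub>R R"]) (use R assms(2) in \<open>simp add: blc\<close>)
qed

lemma op_invertible_scale_iff:
  assumes "c \<noteq> 0"
  shows "op_invertible (c *\<^sub>R S) \<longleftrightarrow> op_invertible S"
  using op_invertible_scale[of "c *\<^sub>R S" "1/c"] op_invertible_scale[of S c] assms by auto

lemma op_invertible_uminus: "op_invertible (- S) \<longleftrightarrow> op_invertible S"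
  using op_invertible_scale_iff[of "-1" S] by simp

lemma op_invertible_compose:
  assumes "op_invertible S" "op_invertible T"
  shows "op_invertible (S o\<^sub>L T)"
proof -
  obtain R where R: "R o\<^sub>L S = id_blinfun" "S o\<^sub>L R = id_blinfun"
    using assms(1) unfolding op_invertible_def by blast
  obtain Q where Q: "Q o\<^sub>L T = id_blinfun" "T o\<^sub>L Q = id_blinfun"
    using assms(2) unfolding op_invertible_def by blast
  have "(Q o\<^sub>L R) o\<^sub>L (S o\<^sub>L T) = Q o\<^sub>L ((R o\<^sub>L S) o\<^sub>L T)" by (simp add: bl_compose_assoc)
  moreover have "(S o\<^sub>L T) o\<^sub>L (Q o\<^sub>L R) = S o\<^sub>L ((T o\<^sub>L Q) o\<^sub>L R)" by (simp add: bl_compose_assoc)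
  ultimately show ?thesis unfolding op_invertible_def using R Q by auto
qed

lemma neumann:
  fixes X :: "'a::{real_inner, complete_space} \<Rightarrow>\<^sub>L 'a"
  assumes "norm X < 1"
  shows "op_invertible (id_blinfun - X)"
proof -
  have g: "summable (\<lambda>n. norm X ^ n)" by (rule summable_geometric) (use assms in simp)
  have sm: "summable (\<lambda>n. op_pow X n)"
    by (rule summable_cmp[OF g]) (rule norm_op_pow)
  have lim: "(\<lambda>n. op_pow X n) \<longlonglongrightarrow> 0"
    by (rule summable_LIMSEQ_zero[OF sm])
  define R where "R = (\<Sum>n. op_pow X n)"
  have bl1: "bounded_linear (\<lambda>Y. (id_blinfun - X) o\<^sub>L Y)"
    by (rule bounded_bilinear.bounded_linear_right[OF bounded_bilinear_blinfun_compose])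
  have bl2: "bounded_linear (\<lambda>Y. Y o\<^sub>L (id_blinfun - X))"
    by (rule bounded_bilinear.bounded_linear_left[OF bounded_bilinear_blinfun_compose])
  have ts: "(\<lambda>n. op_pow X n - op_pow X (Suc n)) sums (id_blinfun - 0)"
    using telescope_sums'[OF lim] by simp
  have "(id_blinfun - X) o\<^sub>L R = (\<Sum>n. (id_blinfun - X) o\<^sub>L op_pow X n)"
    unfolding R_def by (rule bounded_linear.suminf[OF bl1 sm])
  also have "\<dots> = (\<Sum>n. op_pow X n - op_pow X (Suc n))"
    by (simp add: blc)
  also have "\<dots> = id_blinfun"
    using ts sums_unique by fastforce
  finally have 1: "(id_blinfun - X) o\<^sub>L R = id_blinfun" .
  have "R o\<^sub>L (id_blinfun - X) = (\<Sum>n. op_pow X n o\<^sub>L (id_blinfun - X))"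
    unfolding R_def by (rule bounded_linear.suminf[OF bl2 sm])
  also have "\<dots> = (\<Sum>n. op_pow X n - op_pow X (Suc n))"
    by (simp add: blc op_pow_Suc' del: op_pow.simps)
  also have "\<dots> = id_blinfun"
    using ts sums_unique by fastforce
  finally have 2: "R o\<^sub>L (id_blinfun - X) = id_blinfun" .
  show ?thesis unfolding op_invertible_def using 1 2 by blast
qed

lemma sa_bound:
  fixes X :: "'a::{real_inner, complete_space} \<Rightarrow>\<^sub>L 'a"
  assumes sa: "self_adjoint X" and c: "c \<ge> 0"
    and b: "\<And>x. \<bar>inner (X x) x\<bar> \<le> c * (norm x)\<^sup>2"
  shows "norm X \<le> c"
proof (rule norm_blinfun_bound[OF c])
  fix x
  show "norm (X x) \<le> c * norm x"
  proof (cases "X x = 0")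
    case True then show ?thesis using c by simp
  next
    case False
    then have nx: "norm (X x) > 0" by simp
    have x0: "x \<noteq> 0" using False by auto
    define y where "y = (norm x / norm (X x)) *\<^sub>R X x"
    have ny: "norm y = norm x" using nx by (simp add: y_def)
    have ixy: "inner (X x) y = norm x * norm (X x)"
      using nx by (simp add: y_def inner_scaleR_right power2_norm_eq_inner[symmetric] power2_eq_square)
    have sxy: "inner (X y) x = inner (X x) y"
      using sa unfolding self_adjoint_def by (metis inner_commute)
    have pol: "inner (X (x + y)) (x + y) - inner (X (x - y)) (x - y) = 4 * inner (X x) y"
      using sxy by (simp add: blinfun.bilinear_simps inner_add_left inner_add_right inner_diff_left inner_diff_right inner_commute)
    have "inner (X (x + y)) (x + y) \<le> c * (norm (x+y))\<^sup>2" using b[of "x+y"] by linarith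
    moreover have "- inner (X (x - y)) (x - y) \<le> c * (norm (x-y))\<^sup>2" using b[of "x-y"] by linarith
    moreover have "(norm (x+y))\<^sup>2 + (norm (x-y))\<^sup>2 = 2 * (norm x)\<^sup>2 + 2 * (norm y)\<^sup>2"
      by (simp add: power2_norm_eq_inner inner_add_left inner_add_right inner_diff_left inner_diff_right inner_commute)
    ultimately have "4 * (norm x * norm (X x)) \<le> c * (2 * (norm x)\<^sup>2 + 2 * (norm y)\<^sup>2)"
      using pol ixy by (smt (verit, best) distrib_left)
    then have "norm x * norm (X x) \<le> norm x * (c * norm x)"
      using ny by (simp add: power2_eq_square algebra_simps)
    then show ?thesis using x0 by simp
  qed
qed

lemma sa_posdef_invertible:
  fixes S :: "'a::{real_inner, complete_space} \<Rightarrow>\<^sub>L 'a"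
  assumes sa: "self_adjoint S" and m: "m > 0"
    and b: "\<And>x. m * (norm x)\<^sup>2 \<le> inner (S x) x"
  shows "op_invertible S"
proof -
  define M where "M = norm S + m"
  have M: "M > 0" using m by (simp add: M_def add_nonneg_pos)
  define X where "X = id_blinfun - (1/M) *\<^sub>R S"
  have saX: "self_adjoint X"
    using sa by (simp add: X_def self_adjoint_def blinfun.bilinear_simps inner_diff_left inner_diff_right)
  have up: "inner (S x) x \<le> M * (norm x)\<^sup>2" for x
  proof -
    have "inner (S x) x \<le> norm (S x) * norm x" by (rule norm_cauchy_schwarz)
    also have "\<dots> \<le> norm S * norm x * norm x" by (simp add: mult_right_mono norm_blinfun)
    also have "\<dots> \<le> M * (norm x)\<^sup>2" by (simp add: M_def power2_eq_square algebra_simps m less_imp_le)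
    finally show ?thesis .
  qed
  have iX: "inner (X x) x = (norm x)\<^sup>2 - inner (S x) x / M" for x
    by (simp add: X_def blinfun.bilinear_simps inner_diff_left power2_norm_eq_inner)
  have bX: "\<bar>inner (X x) x\<bar> \<le> (1 - m/M) * (norm x)\<^sup>2" for x
  proof -
    have "inner (S x) x / M \<le> (norm x)\<^sup>2" using up[of x] M by (simp add: divide_le_eq mult.commute)
    moreover have "m/M * (norm x)\<^sup>2 \<le> inner (S x) x / M" using b[of x] M by (simp add: divide_right_mono)
    ultimately show ?thesis unfolding iX by (simp add: algebra_simps)
  qed
  have "m \<le> M" by (simp add: M_def)
  then have c0: "1 - m/M \<ge> 0" using M by simp
  have "norm X \<le> 1 - m/M" by (rule sa_bound[OF saX c0 bX])
  also have "\<dots> < 1" using m M by simp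
  finally have "op_invertible (id_blinfun - X)" by (rule neumann)
  then have "op_invertible ((1/M) *\<^sub>R S)" by (simp add: X_def)
  then show ?thesis using op_invertible_scale_iff[of "1/M" S] M by simp
qed


lemma sa_apply: "self_adjoint S \<Longrightarrow> inner (S x) y = inner x (S y)"
  by (simp add: self_adjoint_def)

lemma zero_not_invertible:
  fixes x0 :: "'a::real_normed_vector"
  assumes "x0 \<noteq> 0"
  shows "\<not> op_invertible (0 :: 'a \<Rightarrow>\<^sub>L 'a)"
proof
  assume "op_invertible (0 :: 'a \<Rightarrow>\<^sub>L 'a)"
  then obtain R :: "'a \<Rightarrow>\<^sub>L 'a" where "R o\<^sub>L 0 = id_blinfun" unfolding op_invertible_def by blast
  then have "(R o\<^sub>L 0) x0 = id_blinfun x0" by simp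
  then show False using assms by simp
qed

lemma sa_norm_in_spectrum:
  fixes S :: "'a::{real_inner, complete_space} \<Rightarrow>\<^sub>L 'a" and x0 :: 'a
  assumes sa: "self_adjoint S" and nt: "x0 \<noteq> 0"
  shows "norm S \<in> op_spectrum S \<or> - norm S \<in> op_spectrum S"
proof (cases "norm S = 0")
  case True
  then have "S = 0" by simp
  then show ?thesis using zero_not_invertible[OF nt] True by (simp add: op_spectrum_def)
next
  case False
  define M where "M = norm S"
  have M: "M > 0" using False by (simp add: M_def)
  show ?thesis
  proof (rule ccontr)
    assume "\<not> ?thesis"
    then have i1: "op_invertible (S - M *\<^sub>R id_blinfun)" and i2: "op_invertible (S - (-M) *\<^sub>R id_blinfun)"
      by (auto simp: op_spectrum_def M_def)
    define W where "W = (S - M *\<^sub>R id_blinfun) o\<^sub>L (S - (-M) *\<^sub>R id_blinfun)"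
    have "op_invertible W" unfolding W_def by (rule op_invertible_compose[OF i1 i2])
    then obtain R where R: "R o\<^sub>L W = id_blinfun" unfolding op_invertible_def by blast
    define K where "K = norm R + 1"
    have K: "K > 0" by (simp add: K_def add_nonneg_pos)
    have Wx: "W x = S (S x) - (M*M) *\<^sub>R x" for x
      by (simp add: W_def blinfun.bilinear_simps algebra_simps)
    have lowW: "norm x \<le> K * norm (W x)" for x
    proof -
      have "norm x = norm (R (W x))" using R by (metis blinfun_apply_blinfun_compose blinfun_apply_id_blinfun)
      also have "\<dots> \<le> norm R * norm (W x)" by (rule norm_blinfun)
      also have "\<dots> \<le> K * norm (W x)" by (simp add: K_def mult_right_mono)
      finally show ?thesis .
    qed
    have upW: "(norm (W x))\<^sup>2 \<le> M\<^sup>2 * (M\<^sup>2 * (norm x)\<^sup>2 - (norm (S x))\<^sup>2)" for x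
    proof -
      have ss: "inner (S (S x)) x = (norm (S x))\<^sup>2"
        using sa_apply[OF sa, of "S x" x] by (simp add: power2_norm_eq_inner)
      have nss: "norm (S (S x)) \<le> M * norm (S x)" unfolding M_def by (rule norm_blinfun)
      then have nss2: "(norm (S (S x)))\<^sup>2 \<le> M\<^sup>2 * (norm (S x))\<^sup>2"
        by (metis norm_ge_zero power_mono power_mult_distrib)
      have "(norm (W x))\<^sup>2 = inner (W x) (W x)" by (simp add: power2_norm_eq_inner)
      also have "\<dots> = inner (S (S x)) (S (S x)) - 2 * (M*M) * inner (S (S x)) x + (M*M)*(M*M) * inner x x"
        unfolding Wx by (simp add: inner_diff_left inner_diff_right inner_commute algebra_simps)
      also have "\<dots> = (norm (S (S x)))\<^sup>2 - 2 * (M*M) * inner (S (S x)) x + (M*M)\<^sup>2 * (norm x)\<^sup>2"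
        by (simp only: power2_norm_eq_inner[symmetric]) (simp add: power2_eq_square)
      also have "\<dots> \<le> M\<^sup>2 * (norm (S x))\<^sup>2 - 2 * (M*M) * (norm (S x))\<^sup>2 + (M*M)\<^sup>2 * (norm x)\<^sup>2"
        using nss2 ss by simp
      also have "\<dots> = M\<^sup>2 * (M\<^sup>2 * (norm x)\<^sup>2 - (norm (S x))\<^sup>2)"
        by (simp add: power2_eq_square algebra_simps)
      finally show ?thesis .
    qed
    define \<eta> where "\<eta> = min M (1 / (2 * K\<^sup>2 * M^3))"
    have eta: "\<eta> > 0" "\<eta> \<le> M" "\<eta> \<le> 1 / (2 * K\<^sup>2 * M^3)"
      using M K by (auto simp: \<eta>_def)
    define c where "c = M - \<eta>"
    have c0: "c \<ge> 0" using eta by (simp add: c_def)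
    have "\<not> norm S \<le> c" using eta by (simp add: c_def M_def)
    then obtain x where x: "norm (S x) > c * norm x"
      using norm_blinfun_bound[OF c0, of S] by (meson not_le)
    have "x \<noteq> 0" using x by auto
    then have nx: "norm x > 0" by simp
    have Sx2: "(norm (S x))\<^sup>2 > c\<^sup>2 * (norm x)\<^sup>2"
      using x c0 nx by (metis power_mult_distrib power_strict_mono mult_nonneg_nonneg norm_ge_zero zero_less_numeral)
    have Mc: "M\<^sup>2 - c\<^sup>2 \<le> 1 / (K\<^sup>2 * M\<^sup>2)"
    proof -
      have "M\<^sup>2 - c\<^sup>2 = 2 * M * \<eta> - \<eta>\<^sup>2" by (simp add: c_def power2_eq_square algebra_simps)
      also have "\<dots> \<le> 2 * M * \<eta>" by simp
      also have "\<dots> \<le> 2 * M * (1 / (2 * K\<^sup>2 * M^3))" using eta M by (intro mult_left_mono) auto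
      also have "\<dots> = 1 / (K\<^sup>2 * M\<^sup>2)" using M by (simp add: power2_eq_square power3_eq_cube field_simps)
      finally show ?thesis .
    qed
    have "(norm x)\<^sup>2 \<le> K\<^sup>2 * (norm (W x))\<^sup>2"
      using lowW[of x] by (metis norm_ge_zero power_mono power_mult_distrib)
    also have "\<dots> \<le> K\<^sup>2 * (M\<^sup>2 * (M\<^sup>2 * (norm x)\<^sup>2 - (norm (S x))\<^sup>2))"
      using upW[of x] by (simp add: mult_left_mono)
    also have "\<dots> < K\<^sup>2 * (M\<^sup>2 * (M\<^sup>2 * (norm x)\<^sup>2 - c\<^sup>2 * (norm x)\<^sup>2))"
      using Sx2 K M by (simp add: mult_strict_left_mono)
    also have "\<dots> = (K\<^sup>2 * M\<^sup>2) * (M\<^sup>2 - c\<^sup>2) * (norm x)\<^sup>2" by (simp add: algebra_simps)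
    also have "\<dots> \<le> (K\<^sup>2 * M\<^sup>2) * (1 / (K\<^sup>2 * M\<^sup>2)) * (norm x)\<^sup>2"
      using Mc K M by (intro mult_right_mono mult_left_mono) auto
    also have "\<dots> = (norm x)\<^sup>2" using K M by simp
    finally show False by simp
  qed
qed

lemma sa_spec_min:
  fixes S :: "'a::{real_inner, complete_space} \<Rightarrow>\<^sub>L 'a" and x0 :: 'a
  assumes sa: "self_adjoint S" and nt: "x0 \<noteq> 0"
  shows "\<exists>l\<in>op_spectrum S. \<forall>x. l * (norm x)\<^sup>2 \<le> inner (S x) x"
proof -
  define c where "c = norm S"
  define Y where "Y = S - c *\<^sub>R id_blinfun"
  have saY: "self_adjoint Y"
    using sa by (simp add: Y_def self_adjoint_def blinfun.bilinear_simps inner_diff_left inner_diff_right)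
  have iY: "inner (Y x) x = inner (S x) x - c * (norm x)\<^sup>2" for x
    by (simp add: Y_def blinfun.bilinear_simps inner_diff_left power2_norm_eq_inner)
  have Sup: "inner (S x) x \<le> c * (norm x)\<^sup>2" for x
  proof -
    have "inner (S x) x \<le> norm (S x) * norm x" by (rule norm_cauchy_schwarz)
    also have "\<dots> \<le> c * norm x * norm x" unfolding c_def by (simp add: mult_right_mono norm_blinfun)
    finally show ?thesis by (simp add: power2_eq_square mult.assoc)
  qed
  define N where "N = norm Y"
  have N0: "N \<ge> 0" by (simp add: N_def)
  have Ylow: "- N * (norm x)\<^sup>2 \<le> inner (Y x) x" for x
  proof -
    have "\<bar>inner (Y x) x\<bar> \<le> norm (Y x) * norm x" by (rule Cauchy_Schwarz_ineq2)
    also have "\<dots> \<le> N * norm x * norm x" unfolding N_def by (simp add: mult_right_mono norm_blinfun)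
    finally show ?thesis by (simp add: power2_eq_square mult.assoc)
  qed
  have mN: "- N \<in> op_spectrum Y"
  proof -
    have "N \<in> op_spectrum Y \<or> - N \<in> op_spectrum Y"
      unfolding N_def by (rule sa_norm_in_spectrum[OF saY nt])
    moreover have "N \<notin> op_spectrum Y" if "N > 0"
    proof -
      define Z where "Z = N *\<^sub>R id_blinfun - Y"
      have saZ: "self_adjoint Z"
        using saY by (simp add: Z_def self_adjoint_def blinfun.bilinear_simps inner_diff_left inner_diff_right)
      have "N * (norm x)\<^sup>2 \<le> inner (Z x) x" for x
        using iY[of x] Sup[of x] by (simp add: Z_def blinfun.bilinear_simps inner_diff_left power2_norm_eq_inner)
      then have "op_invertible Z" by (rule sa_posdef_invertible[OF saZ that])
      then have "op_invertible (- Z)" by (simp add: op_invertible_uminus)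
      moreover have "- Z = Y - N *\<^sub>R id_blinfun" by (simp add: Z_def)
      ultimately show ?thesis by (simp add: op_spectrum_def)
    qed
    ultimately show ?thesis using N0 by force
  qed
  have "S - (c - N) *\<^sub>R id_blinfun = Y - (- N) *\<^sub>R id_blinfun"
    by (simp add: Y_def algebra_simps)
  then have "c - N \<in> op_spectrum S" using mN by (simp add: op_spectrum_def)
  moreover have "(c - N) * (norm x)\<^sup>2 \<le> inner (S x) x" for x
    using Ylow[of x] iY[of x] by (simp add: algebra_simps)
  ultimately show ?thesis by blast
qed

lemma spectrum_uminus: "l \<in> op_spectrum (- S) \<longleftrightarrow> - l \<in> op_spectrum S"
proof -
  have e: "- S - l *\<^sub>R id_blinfun = - (S - (- l) *\<^sub>R id_blinfun)" by (simp add: algebra_simps)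
  show ?thesis by (simp only: op_spectrum_def mem_Collect_eq e op_invertible_uminus)
qed

lemma sa_spec_max:
  fixes S :: "'a::{real_inner, complete_space} \<Rightarrow>\<^sub>L 'a" and x0 :: 'a
  assumes sa: "self_adjoint S" and nt: "x0 \<noteq> 0"
  shows "\<exists>l\<in>op_spectrum S. \<forall>x. inner (S x) x \<le> l * (norm x)\<^sup>2"
proof -
  have "self_adjoint (- S)" using sa by (simp add: self_adjoint_def blinfun.bilinear_simps)
  from sa_spec_min[OF this nt] obtain l where l: "l \<in> op_spectrum (- S)" "\<forall>x. l * (norm x)\<^sup>2 \<le> inner ((- S) x) x"
    by blast
  have "- l \<in> op_spectrum S" using l(1) by (simp add: spectrum_uminus)
  moreover have "inner (S x) x \<le> (- l) * (norm x)\<^sup>2" for x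
    using l(2)[rule_format, of x] by (simp add: blinfun.bilinear_simps)
  ultimately show ?thesis by blast
qed

lemma sa_spectrum_subset:
  fixes S :: "'a::{real_inner, complete_space} \<Rightarrow>\<^sub>L 'a"
  assumes sa: "self_adjoint S"
    and lo: "\<And>x. a * (norm x)\<^sup>2 \<le> inner (S x) x"
    and hi: "\<And>x. inner (S x) x \<le> b * (norm x)\<^sup>2"
  shows "op_spectrum S \<subseteq> {a..b}"
proof
  fix t assume t: "t \<in> op_spectrum S"
  have "a \<le> t"
  proof (rule ccontr)
    assume "\<not> a \<le> t"
    then have at: "a - t > 0" by simp
    have sa': "self_adjoint (S - t *\<^sub>R id_blinfun)"
      using sa by (simp add: self_adjoint_def blinfun.bilinear_simps inner_diff_left inner_diff_right)
    have "(a - t) * (norm x)\<^sup>2 \<le> inner ((S - t *\<^sub>R id_blinfun) x) x" for x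
      using lo[of x] by (simp add: blinfun.bilinear_simps inner_diff_left power2_norm_eq_inner algebra_simps)
    then have "op_invertible (S - t *\<^sub>R id_blinfun)" by (rule sa_posdef_invertible[OF sa' at])
    then show False using t by (simp add: op_spectrum_def)
  qed
  moreover have "t \<le> b"
  proof (rule ccontr)
    assume "\<not> t \<le> b"
    then have at: "t - b > 0" by simp
    have sa': "self_adjoint (t *\<^sub>R id_blinfun - S)"
      using sa by (simp add: self_adjoint_def blinfun.bilinear_simps inner_diff_left inner_diff_right)
    have "(t - b) * (norm x)\<^sup>2 \<le> inner ((t *\<^sub>R id_blinfun - S) x) x" for x
      using hi[of x] by (simp add: blinfun.bilinear_simps inner_diff_left power2_norm_eq_inner algebra_simps)
    then have "op_invertible (t *\<^sub>R id_blinfun - S)" by (rule sa_posdef_invertible[OF sa' at])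
    then have "op_invertible (S - t *\<^sub>R id_blinfun)"
      using op_invertible_uminus[of "t *\<^sub>R id_blinfun - S"] by simp
    then show False using t by (simp add: op_spectrum_def)
  qed
  ultimately show "t \<in> {a..b}" by simp
qed


lemma map_of_real_add:
  "map_poly complex_of_real (p + q) = map_poly of_real p + map_poly of_real q"
  by (rule poly_eqI) (simp add: coeff_map_poly)

lemma map_of_real_mult:
  "map_poly complex_of_real (p * q) = map_poly of_real p * map_poly of_real q"
  by (rule poly_eqI) (simp add: coeff_map_poly coeff_mult)

lemma map_of_real_pCons:
  "map_poly complex_of_real (pCons a p) = pCons (of_real a) (map_poly of_real p)"
  by (rule map_poly_pCons) simp

lemma poly_map_of_real: "poly (map_poly complex_of_real p) (of_real x) = of_real (poly p x)"
  by (induction p) (simp_all add: map_of_real_pCons)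

lemma op_invertible_id: "op_invertible id_blinfun"
  unfolding op_invertible_def by (rule exI[of _ id_blinfun]) simp

lemma poly_op_invertible:
  fixes T :: "'a::{real_inner, complete_space} \<Rightarrow>\<^sub>L 'a" and x0 :: 'a
  assumes sa: "self_adjoint T" and nt: "x0 \<noteq> 0"
  shows "(\<forall>t\<in>op_spectrum T. poly q t \<noteq> 0) \<Longrightarrow> op_invertible (poly_op q T)"
proof (induction "degree q" arbitrary: q rule: less_induct)
  case (less q)
  obtain l where l: "l \<in> op_spectrum T" using sa_spec_min[OF sa nt] by blast
  have q0: "q \<noteq> 0" using less.prems l by auto
  show ?case
  proof (cases "degree q = 0")
    case True
    then obtain c where qc: "q = [:c:]" by (metis degree_eq_zeroE)
    then have "c \<noteq> 0" using q0 by simp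
    then show ?thesis by (simp add: qc op_invertible_scale op_invertible_id)
  next
    case False
    let ?qc = "map_poly complex_of_real q"
    have dqc: "degree ?qc = degree q" by (rule degree_map_poly) simp
    have "\<not> (\<exists>a l. a \<noteq> 0 \<and> l = 0 \<and> ?qc = pCons a l)"
      using False dqc by auto
    then obtain z where z: "poly ?qc z = 0" using fundamental_theorem_of_algebra_alt by blast
    show ?thesis
    proof (cases "Im z = 0")
      case True
      define r where "r = Re z"
      have zr: "z = of_real r" using True by (simp add: r_def complex_eq_iff)
      have "poly q r = 0" using z unfolding zr poly_map_of_real by simp
      then obtain q1 where q1: "q = [:-r,1:] * q1" using poly_eq_0_iff_dvd by (metis dvdE)
      have q10: "q1 \<noteq> 0" using q0 q1 by auto
      have "degree q = 1 + degree q1" unfolding q1 using q10 by (subst degree_mult_eq) auto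
      then have dlt: "degree q1 < degree q" by simp
      have rns: "r \<notin> op_spectrum T" using less.prems \<open>poly q r = 0\<close> by auto
      have "\<forall>t\<in>op_spectrum T. poly q1 t \<noteq> 0" using less.prems unfolding q1 by auto
      then have i1: "op_invertible (poly_op q1 T)" using less.hyps dlt by blast
      have "poly_op [:-r,1:] T = T - r *\<^sub>R id_blinfun" by (simp add: poly_op_pCons)
      then have i2: "op_invertible (poly_op [:-r,1:] T)" using rns by (simp add: op_spectrum_def)
      show ?thesis unfolding q1 poly_op_mult by (rule op_invertible_compose[OF i2 i1])
    next
      case False
      define a where "a = Re z"
      define b where "b = Im z"
      have "b \<noteq> 0" using False by (simp add: b_def)
      then have b0: "b * b > 0" by (metis power2_eq_square zero_less_power2)
      define d where "d = [:-a,1:] * [:-a,1:] + [:b*b:]"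
      have dz: "poly (map_poly complex_of_real d) z = 0"
        by (simp add: d_def map_of_real_add map_of_real_mult map_of_real_pCons complex_eq_iff a_def b_def algebra_simps)
      have dpos: "poly d t > 0" for t
      proof -
        have "poly d t = (t - a)*(t - a) + b*b" by (simp add: d_def algebra_simps)
        then show ?thesis using b0 zero_le_square[of "t-a"] by linarith
      qed
      then have d0: "d \<noteq> 0" by auto
      have dd: "degree d = 2"
      proof -
        have "degree ([:-a,1:] * [:-a,1:]) = 2" by (subst degree_mult_eq) auto
        then show ?thesis unfolding d_def by (subst degree_add_eq_left) auto
      qed
      define q1 where "q1 = q div d"
      define rm where "rm = q mod d"
      have qd: "q = d * q1 + rm" unfolding q1_def rm_def by (metis div_mult_mod_eq mult.commute)
      have "rm = 0 \<or> degree rm < 2" using degree_mod_less[OF d0, of q] dd by (simp add: rm_def)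
      then have rmf: "rm = [:coeff rm 0, coeff rm 1:]"
      proof
        assume "degree rm < 2"
        then show ?thesis
          by (intro poly_eqI) (auto simp: coeff_pCons coeff_eq_0 split: nat.split)
      qed simp
      have "poly (map_poly complex_of_real rm) z = 0"
        using z dz unfolding qd by (simp add: map_of_real_add map_of_real_mult)
      then have "of_real (coeff rm 0) + of_real (coeff rm 1) * z = 0"
        by (subst (asm) rmf) (simp add: map_of_real_pCons mult.commute)
      then have "coeff rm 1 * b = 0" "coeff rm 0 + coeff rm 1 * a = 0"
        by (simp_all add: complex_eq_iff a_def b_def)
      then have "coeff rm 1 = 0" "coeff rm 0 = 0" using False by (auto simp: b_def)
      then have rm0: "rm = 0" by (subst rmf) simp
      then have qd': "q = d * q1" using qd by simp
      have q10: "q1 \<noteq> 0" using q0 qd' by auto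
      have "degree q = 2 + degree q1" unfolding qd' using q10 d0 dd by (subst degree_mult_eq) auto
      then have dlt: "degree q1 < degree q" by simp
      have "\<forall>t\<in>op_spectrum T. poly q1 t \<noteq> 0" using less.prems unfolding qd' by auto
      then have i1: "op_invertible (poly_op q1 T)" using less.hyps dlt by blast
      define U where "U = T - a *\<^sub>R id_blinfun"
      have saU: "self_adjoint U"
        using sa by (simp add: U_def self_adjoint_def blinfun.bilinear_simps inner_diff_left inner_diff_right)
      have Ud: "poly_op d T = (U o\<^sub>L U) + (b*b) *\<^sub>R id_blinfun"
        unfolding d_def poly_op_add poly_op_mult by (simp add: poly_op_pCons U_def)
      have sad: "self_adjoint (poly_op d T)" by (rule sa_poly_op[OF sa])
      have "b * b * (norm x)\<^sup>2 \<le> inner (poly_op d T x) x" for x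
      proof -
        have "inner (poly_op d T x) x = inner (U (U x)) x + b * b * (norm x)\<^sup>2"
          by (simp add: Ud blinfun.bilinear_simps inner_add_left power2_norm_eq_inner)
        also have "inner (U (U x)) x = (norm (U x))\<^sup>2"
          using sa_apply[OF saU, of "U x" x] by (simp add: power2_norm_eq_inner)
        finally show ?thesis by simp
      qed
      then have i2: "op_invertible (poly_op d T)" by (rule sa_posdef_invertible[OF sad b0])
      show ?thesis unfolding qd' poly_op_mult by (rule op_invertible_compose[OF i2 i1])
    qed
  qed
qed



lemma spec_map:
  fixes T :: "'a::{real_inner, complete_space} \<Rightarrow>\<^sub>L 'a" and x0 :: 'a
  assumes sa: "self_adjoint T" and nt: "x0 \<noteq> 0"
    and l: "l \<in> op_spectrum (poly_op p T)"
  shows "\<exists>t\<in>op_spectrum T. poly p t = l"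
proof (rule ccontr)
  assume "\<not> ?thesis"
  then have "\<forall>t\<in>op_spectrum T. poly (p - [:l:]) t \<noteq> 0" by auto
  then have "op_invertible (poly_op (p - [:l:]) T)" by (rule poly_op_invertible[OF sa nt])
  then show False using l by (simp add: poly_op_diff op_spectrum_def)
qed

lemma poly_op_norm:
  fixes T :: "'a::{real_inner, complete_space} \<Rightarrow>\<^sub>L 'a" and x0 :: 'a
  assumes sa: "self_adjoint T" and nt: "x0 \<noteq> 0"
  shows "\<exists>t\<in>op_spectrum T. norm (poly_op p T) \<le> \<bar>poly p t\<bar>"
proof -
  have saS: "self_adjoint (poly_op p T)" by (rule sa_poly_op[OF sa])
  obtain l1 where l1: "l1 \<in> op_spectrum (poly_op p T)" "\<forall>x. l1 * (norm x)\<^sup>2 \<le> inner (poly_op p T x) x"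
    using sa_spec_min[OF saS nt] by blast
  obtain l2 where l2: "l2 \<in> op_spectrum (poly_op p T)" "\<forall>x. inner (poly_op p T x) x \<le> l2 * (norm x)\<^sup>2"
    using sa_spec_max[OF saS nt] by blast
  obtain t1 where t1: "t1 \<in> op_spectrum T" "poly p t1 = l1" using spec_map[OF sa nt l1(1)] by blast
  obtain t2 where t2: "t2 \<in> op_spectrum T" "poly p t2 = l2" using spec_map[OF sa nt l2(1)] by blast
  define c where "c = max \<bar>l1\<bar> \<bar>l2\<bar>"
  have "\<bar>inner (poly_op p T x) x\<bar> \<le> c * (norm x)\<^sup>2" for x
  proof -
    have a: "l1 * (norm x)\<^sup>2 \<le> inner (poly_op p T x) x" using l1(2) by blast
    have b: "inner (poly_op p T x) x \<le> l2 * (norm x)\<^sup>2" using l2(2) by blast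
    have n0: "(norm x)\<^sup>2 \<ge> 0" by simp
    have "- c * (norm x)\<^sup>2 \<le> l1 * (norm x)\<^sup>2" using n0 by (intro mult_right_mono) (auto simp: c_def)
    moreover have "l2 * (norm x)\<^sup>2 \<le> c * (norm x)\<^sup>2" using n0 by (intro mult_right_mono) (auto simp: c_def)
    ultimately show ?thesis using a b by linarith
  qed
  then have "norm (poly_op p T) \<le> c" by (intro sa_bound[OF saS]) (auto simp: c_def)
  then show ?thesis using t1 t2 by (auto simp: c_def max_def split: if_splits)
qed

lemma poly_op_lower:
  fixes T :: "'a::{real_inner, complete_space} \<Rightarrow>\<^sub>L 'a" and x0 :: 'a
  assumes sa: "self_adjoint T" and nt: "x0 \<noteq> 0"
  shows "\<exists>t\<in>op_spectrum T. \<forall>x. poly p t * (norm x)\<^sup>2 \<le> inner (poly_op p T x) x"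
proof -
  have saS: "self_adjoint (poly_op p T)" by (rule sa_poly_op[OF sa])
  obtain l1 where l1: "l1 \<in> op_spectrum (poly_op p T)" "\<forall>x. l1 * (norm x)\<^sup>2 \<le> inner (poly_op p T x) x"
    using sa_spec_min[OF saS nt] by blast
  obtain t1 where t1: "t1 \<in> op_spectrum T" "poly p t1 = l1" using spec_map[OF sa nt l1(1)] by blast
  then show ?thesis using l1 by blast
qed

definition unif :: "(real \<Rightarrow> real) \<Rightarrow> real set \<Rightarrow> (nat \<Rightarrow> real poly) \<Rightarrow> bool" where
  "unif f S P \<longleftrightarrow> (\<forall>d>0. eventually (\<lambda>n. \<forall>t\<in>S. \<bar>f t - poly (P n) t\<bar> < d) sequentially)"

lemma unif_D:
  assumes "unif f S P" "d > 0"
  obtains N where "\<And>n t. n \<ge> N \<Longrightarrow> t \<in> S \<Longrightarrow> \<bar>f t - poly (P n) t\<bar> < d"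
  using assms unfolding unif_def eventually_sequentially by blast

lemma unif_subset:
  assumes "unif f K P" "S \<subseteq> K"
  shows "unif f S P"
  unfolding unif_def
proof (intro allI impI)
  fix d :: real assume "d > 0"
  then have "eventually (\<lambda>n. \<forall>t\<in>K. \<bar>f t - poly (P n) t\<bar> < d) sequentially"
    using assms(1) unfolding unif_def by blast
  then show "eventually (\<lambda>n. \<forall>t\<in>S. \<bar>f t - poly (P n) t\<bar> < d) sequentially"
    by (rule eventually_mono) (use assms(2) in blast)
qed

lemma cfc_limit:
  fixes T :: "'a::{real_inner, complete_space} \<Rightarrow>\<^sub>L 'a" and x0 :: 'a
  assumes sa: "self_adjoint T" and nt: "x0 \<noteq> 0" and u: "unif f (op_spectrum T) P"
  shows "(\<lambda>n. poly_op (P n) T) \<longlonglongrightarrow> cfc f T"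
proof -
  let ?S = "op_spectrum T"
  let ?L = "\<lambda>n. poly_op (P n) T"
  have dist_bound: "\<exists>t\<in>?S. norm (poly_op p T - poly_op q T) \<le> \<bar>f t - poly p t\<bar> + \<bar>f t - poly q t\<bar>" for p q
  proof -
    obtain t where t: "t \<in> ?S" "norm (poly_op (p - q) T) \<le> \<bar>poly (p - q) t\<bar>"
      using poly_op_norm[OF sa nt] by blast
    then show ?thesis by (intro bexI[OF _ t(1)]) (simp add: poly_op_diff)
  qed
  have "Cauchy ?L"
    unfolding Cauchy_iff
  proof (intro allI impI)
    fix e :: real assume e: "e > 0"
    obtain N where N: "\<And>n t. n \<ge> N \<Longrightarrow> t \<in> ?S \<Longrightarrow> \<bar>f t - poly (P n) t\<bar> < e/2"
      using unif_D[OF u, of "e/2"] e by auto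
    show "\<exists>M. \<forall>m\<ge>M. \<forall>n\<ge>M. norm (?L m - ?L n) < e"
    proof (intro exI allI impI)
      fix m n assume mn: "N \<le> m" "N \<le> n"
      obtain t where t: "t \<in> ?S" "norm (?L m - ?L n) \<le> \<bar>f t - poly (P m) t\<bar> + \<bar>f t - poly (P n) t\<bar>"
        using dist_bound by blast
      show "norm (?L m - ?L n) < e" using t N[OF mn(1) t(1)] N[OF mn(2) t(1)] by linarith
    qed
  qed
  then obtain Lim where Lim: "?L \<longlonglongrightarrow> Lim"
    using blinfun_Cauchy_convergent unfolding convergent_def by blast
  define \<Phi> where "\<Phi> = (\<lambda>L. \<forall>\<epsilon>>0. \<exists>\<delta>>0. \<forall>p.
      (\<forall>t\<in>?S. \<bar>f t - poly p t\<bar> < \<delta>) \<longrightarrow> norm (L - poly_op p T) < \<epsilon>)"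
  have LimD: "\<exists>N. \<forall>n\<ge>N. norm (?L n - Lim) < e" if "e > 0" for e
    using Lim that unfolding LIMSEQ_def dist_norm by blast
  have PL: "\<Phi> Lim" unfolding \<Phi>_def
  proof (intro allI impI)
    fix \<epsilon> :: real assume \<epsilon>: "\<epsilon> > 0"
    show "\<exists>\<delta>>0. \<forall>p. (\<forall>t\<in>?S. \<bar>f t - poly p t\<bar> < \<delta>) \<longrightarrow> norm (Lim - poly_op p T) < \<epsilon>"
    proof (intro exI[of _ "\<epsilon>/2"] conjI allI impI)
      fix p assume p: "\<forall>t\<in>?S. \<bar>f t - poly p t\<bar> < \<epsilon>/2"
      obtain N1 where N1: "\<And>n t. n \<ge> N1 \<Longrightarrow> t \<in> ?S \<Longrightarrow> \<bar>f t - poly (P n) t\<bar> < \<epsilon>/8"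
        using unif_D[OF u, of "\<epsilon>/8"] \<epsilon> by auto
      obtain N2 where N2: "\<forall>n\<ge>N2. norm (?L n - Lim) < \<epsilon>/8" using LimD[of "\<epsilon>/8"] \<epsilon> by auto
      define n where "n = max N1 N2"
      obtain t where t: "t \<in> ?S" "norm (?L n - poly_op p T) \<le> \<bar>f t - poly (P n) t\<bar> + \<bar>f t - poly p t\<bar>"
        using dist_bound by blast
      have "Lim - poly_op p T = (Lim - ?L n) + (?L n - poly_op p T)" by simp
      then have tri: "norm (Lim - poly_op p T) \<le> norm (Lim - ?L n) + norm (?L n - poly_op p T)"
        by (metis norm_triangle_ineq)
      have mc: "norm (Lim - ?L n) = norm (?L n - Lim)" by (rule norm_minus_commute)
      have a: "norm (?L n - Lim) < \<epsilon>/8" using N2 by (simp add: n_def)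
      have b: "\<bar>f t - poly (P n) t\<bar> < \<epsilon>/8" using N1[of n t] t(1) by (simp add: n_def)
      have c: "\<bar>f t - poly p t\<bar> < \<epsilon>/2" using p t(1) by blast
      show "norm (Lim - poly_op p T) < \<epsilon>" using tri mc a b c t(2) \<epsilon> by linarith
    qed (use \<epsilon> in simp)
  qed
  have uniq: "L1 = L2" if h1: "\<Phi> L1" and h2: "\<Phi> L2" for L1 L2
  proof (rule ccontr)
    assume ne: "L1 \<noteq> L2"
    define e where "e = norm (L1 - L2)"
    have e: "e > 0" using ne by (simp add: e_def)
    obtain d1 where d1: "d1 > 0" "\<forall>p. (\<forall>t\<in>?S. \<bar>f t - poly p t\<bar> < d1) \<longrightarrow> norm (L1 - poly_op p T) < e/2"
      using h1 e unfolding \<Phi>_def by (meson half_gt_zero)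
    obtain d2 where d2: "d2 > 0" "\<forall>p. (\<forall>t\<in>?S. \<bar>f t - poly p t\<bar> < d2) \<longrightarrow> norm (L2 - poly_op p T) < e/2"
      using h2 e unfolding \<Phi>_def by (meson half_gt_zero)
    obtain N where N: "\<And>n t. n \<ge> N \<Longrightarrow> t \<in> ?S \<Longrightarrow> \<bar>f t - poly (P n) t\<bar> < min d1 d2"
      using unif_D[OF u, of "min d1 d2"] d1 d2 by auto
    have "norm (L1 - ?L N) < e/2" using d1(2) N by auto
    moreover have "norm (L2 - ?L N) < e/2" using d2(2) N by auto
    moreover have "L1 - L2 = (L1 - ?L N) - (L2 - ?L N)" by simp
    then have "norm (L1 - L2) \<le> norm (L1 - ?L N) + norm (L2 - ?L N)" by (metis norm_triangle_ineq4)
    ultimately have "norm (L1 - L2) < e" by linarith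
    then show False by (simp add: e_def)
  qed
  have "cfc f T = (THE L. \<Phi> L)" unfolding cfc_def \<Phi>_def ..
  also have "\<dots> = Lim" using PL uniq by (intro the_equality[where P="\<Phi>"]) blast+
  finally have "cfc f T = Lim" .
  then show ?thesis using Lim by simp
qed

lemma weier_poly:
  fixes f :: "real \<Rightarrow> real"
  assumes K: "compact K" and f: "continuous_on K f" and e: "e > 0"
  shows "\<exists>p. \<forall>t\<in>K. \<bar>f t - poly p t\<bar> < e"
proof -
  obtain g where g: "real_polynomial_function g" "\<And>x. x \<in> K \<Longrightarrow> \<bar>f x - g x\<bar> < e"
    using Stone_Weierstrass_real_polynomial_function[OF K f e] by blast
  obtain a n where gan: "g = (\<lambda>x. \<Sum>i\<le>n. a i * x^i)"
    using g(1) real_polynomial_function_iff_sum by blast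
  define p where "p = (\<Sum>i\<le>n. monom (a i) i)"
  have "poly p x = g x" for x by (simp add: p_def gan poly_sum poly_monom)
  then show ?thesis using g(2) by metis
qed

lemma unif_exists:
  fixes f :: "real \<Rightarrow> real"
  assumes K: "compact K" and f: "continuous_on K f"
  shows "\<exists>P. unif f K P"
proof -
  have "\<forall>n. \<exists>p. \<forall>t\<in>K. \<bar>f t - poly p t\<bar> < inverse (real (Suc n))"
    using weier_poly[OF K f] by simp
  then obtain P where P: "\<And>n t. t \<in> K \<Longrightarrow> \<bar>f t - poly (P n) t\<bar> < inverse (real (Suc n))"
    by metis
  have "unif f K P" unfolding unif_def
  proof (intro allI impI)
    fix d :: real assume d: "d > 0"
    obtain N where N: "inverse (real (Suc N)) < d" using reals_Archimedean[OF d] by blast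
    show "eventually (\<lambda>n. \<forall>t\<in>K. \<bar>f t - poly (P n) t\<bar> < d) sequentially"
      unfolding eventually_sequentially
    proof (intro exI allI impI ballI)
      fix n t assume n: "N \<le> n" and t: "t \<in> K"
      have "inverse (real (Suc n)) \<le> inverse (real (Suc N))" using n by (simp add: le_imp_inverse_le)
      then show "\<bar>f t - poly (P n) t\<bar> < d" using P[OF t, of n] N by linarith
    qed
  qed
  then show ?thesis by blast
qed

lemma cfc_seq:
  fixes T :: "'a::{real_inner, complete_space} \<Rightarrow>\<^sub>L 'a" and x0 :: 'a
  assumes sa: "self_adjoint T" and nt: "x0 \<noteq> 0" and sp: "op_spectrum T \<subseteq> {a..b}"
    and f: "continuous_on {a..b} f"
  shows "\<exists>P. unif f {a..b} P \<and> (\<lambda>n. poly_op (P n) T) \<longlonglongrightarrow> cfc f T"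
proof -
  obtain P where P: "unif f {a..b} P" using unif_exists[OF compact_Icc f] by blast
  then have "unif f (op_spectrum T) P" using sp by (rule unif_subset)
  then show ?thesis using P cfc_limit[OF sa nt] by blast
qed

lemma cont_bounded:
  fixes f :: "real \<Rightarrow> real"
  assumes "continuous_on {a..b} f"
  shows "\<exists>B\<ge>0. \<forall>t\<in>{a..b}. \<bar>f t\<bar> \<le> B"
proof -
  have "bounded (f ` {a..b})" using compact_continuous_image[OF assms compact_Icc] compact_imp_bounded by blast
  then obtain B where "\<forall>x\<in>f ` {a..b}. \<bar>x\<bar> \<le> B" unfolding bounded_real by blast
  then show ?thesis by (intro exI[of _ "max B 0"]) auto
qed

lemma unif_lin:
  assumes u1: "unif f S P" and u2: "unif g S Q"
  shows "unif (\<lambda>t. c * f t + d * g t) S (\<lambda>n. smult c (P n) + smult d (Q n))"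
  unfolding unif_def
proof (intro allI impI)
  fix e :: real assume e: "e > 0"
  define \<eta> where "\<eta> = e / (\<bar>c\<bar> + \<bar>d\<bar> + 1)"
  have \<eta>: "\<eta> > 0" using e by (simp add: \<eta>_def add_nonneg_pos)
  obtain N1 where N1: "\<And>n t. n \<ge> N1 \<Longrightarrow> t \<in> S \<Longrightarrow> \<bar>f t - poly (P n) t\<bar> < \<eta>"
    using unif_D[OF u1 \<eta>] by blast
  obtain N2 where N2: "\<And>n t. n \<ge> N2 \<Longrightarrow> t \<in> S \<Longrightarrow> \<bar>g t - poly (Q n) t\<bar> < \<eta>"
    using unif_D[OF u2 \<eta>] by blast
  show "eventually (\<lambda>n. \<forall>t\<in>S. \<bar>c * f t + d * g t - poly (smult c (P n) + smult d (Q n)) t\<bar> < e) sequentially"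
    unfolding eventually_sequentially
  proof (intro exI[of _ "max N1 N2"] allI impI ballI)
    fix n t assume n: "max N1 N2 \<le> n" and t: "t \<in> S"
    have h1: "\<bar>f t - poly (P n) t\<bar> < \<eta>" using N1[OF _ t] n by simp
    have h2: "\<bar>g t - poly (Q n) t\<bar> < \<eta>" using N2[OF _ t] n by simp
    have "\<bar>c * f t + d * g t - poly (smult c (P n) + smult d (Q n)) t\<bar>
        = \<bar>c * (f t - poly (P n) t) + d * (g t - poly (Q n) t)\<bar>" by (simp add: algebra_simps)
    also have "\<dots> \<le> \<bar>c\<bar> * \<bar>f t - poly (P n) t\<bar> + \<bar>d\<bar> * \<bar>g t - poly (Q n) t\<bar>"
      by (metis abs_mult abs_triangle_ineq)
    also have "\<dots> \<le> \<bar>c\<bar> * \<eta> + \<bar>d\<bar> * \<eta>"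
      using h1 h2 by (intro add_mono mult_left_mono) auto
    also have "\<dots> < (\<bar>c\<bar> + \<bar>d\<bar> + 1) * \<eta>" using \<eta> by (simp add: algebra_simps)
    also have "\<dots> = e" by (simp add: \<eta>_def)
    finally show "\<bar>c * f t + d * g t - poly (smult c (P n) + smult d (Q n)) t\<bar> < e" .
  qed
qed

lemma unif_mult:
  assumes u1: "unif f S P" and u2: "unif g S Q" and B: "B \<ge> 0"
    and bf: "\<And>t. t \<in> S \<Longrightarrow> \<bar>f t\<bar> \<le> B" and bg: "\<And>t. t \<in> S \<Longrightarrow> \<bar>g t\<bar> \<le> B"
  shows "unif (\<lambda>t. f t * g t) S (\<lambda>n. P n * Q n)"
  unfolding unif_def
proof (intro allI impI)
  fix e :: real assume e: "e > 0"
  define \<eta> where "\<eta> = min 1 (e / (2 * B + 2))"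
  have e1: "\<eta> \<le> e / (2 * B + 2)" by (simp add: \<eta>_def)
  have e2: "\<eta> * (2 * B + 2) \<le> e" using e1 B by (simp add: pos_le_divide_eq)
  have \<eta>: "\<eta> > 0" "\<eta> \<le> 1" "\<eta> * (2 * B + 2) \<le> e" using e B e2 by (auto simp: \<eta>_def)
  obtain N1 where N1: "\<And>n t. n \<ge> N1 \<Longrightarrow> t \<in> S \<Longrightarrow> \<bar>f t - poly (P n) t\<bar> < \<eta>"
    using unif_D[OF u1 \<eta>(1)] by blast
  obtain N2 where N2: "\<And>n t. n \<ge> N2 \<Longrightarrow> t \<in> S \<Longrightarrow> \<bar>g t - poly (Q n) t\<bar> < \<eta>"
    using unif_D[OF u2 \<eta>(1)] by blast
  show "eventually (\<lambda>n. \<forall>t\<in>S. \<bar>f t * g t - poly (P n * Q n) t\<bar> < e) sequentially"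
    unfolding eventually_sequentially
  proof (intro exI[of _ "max N1 N2"] allI impI ballI)
    fix n t assume n: "max N1 N2 \<le> n" and t: "t \<in> S"
    define p where "p = poly (P n) t"
    define q where "q = poly (Q n) t"
    have h1: "\<bar>f t - p\<bar> < \<eta>" using N1[OF _ t] n by (simp add: p_def)
    have h2: "\<bar>g t - q\<bar> < \<eta>" using N2[OF _ t] n by (simp add: q_def)
    have qb: "\<bar>q\<bar> \<le> B + 1" using h2 bg[OF t] \<eta>(2) by linarith
    have "\<bar>f t * g t - p * q\<bar> = \<bar>f t * (g t - q) + q * (f t - p)\<bar>" by (simp add: algebra_simps)
    also have "\<dots> \<le> \<bar>f t\<bar> * \<bar>g t - q\<bar> + \<bar>q\<bar> * \<bar>f t - p\<bar>"
      by (metis abs_mult abs_triangle_ineq)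
    also have "\<dots> \<le> B * \<eta> + (B + 1) * \<eta>"
      using h1 h2 bf[OF t] qb by (intro add_mono mult_mono) auto
    also have "\<dots> < \<eta> * (2 * B + 2)" using \<eta>(1) by (simp add: algebra_simps)
    also have "\<dots> \<le> e" by (rule \<eta>(3))
    finally show "\<bar>f t * g t - poly (P n * Q n) t\<bar> < e" by (simp add: p_def q_def)
  qed
qed


lemma cfc_lin:
  fixes T :: "'a::{real_inner, complete_space} \<Rightarrow>\<^sub>L 'a" and x0 :: 'a
  assumes sa: "self_adjoint T" and nt: "x0 \<noteq> 0" and sp: "op_spectrum T \<subseteq> {a..b}"
    and f: "continuous_on {a..b} f" and g: "continuous_on {a..b} g"
  shows "cfc (\<lambda>t. c * f t + d * g t) T = c *\<^sub>R cfc f T + d *\<^sub>R cfc g T"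
proof -
  obtain P where P: "unif f {a..b} P" "(\<lambda>n. poly_op (P n) T) \<longlonglongrightarrow> cfc f T"
    using cfc_seq[OF sa nt sp f] by blast
  obtain Q where Q: "unif g {a..b} Q" "(\<lambda>n. poly_op (Q n) T) \<longlonglongrightarrow> cfc g T"
    using cfc_seq[OF sa nt sp g] by blast
  have "unif (\<lambda>t. c * f t + d * g t) (op_spectrum T) (\<lambda>n. smult c (P n) + smult d (Q n))"
    using unif_lin[OF P(1) Q(1)] sp by (rule unif_subset)
  then have 1: "(\<lambda>n. poly_op (smult c (P n) + smult d (Q n)) T) \<longlonglongrightarrow> cfc (\<lambda>t. c * f t + d * g t) T"
    by (rule cfc_limit[OF sa nt])
  have 2: "(\<lambda>n. poly_op (smult c (P n) + smult d (Q n)) T) \<longlonglongrightarrow> c *\<^sub>R cfc f T + d *\<^sub>R cfc g T"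
    unfolding poly_op_add poly_op_smult by (intro tendsto_intros P(2) Q(2))
  show ?thesis using LIMSEQ_unique[OF 1 2] .
qed

lemma cfc_mult:
  fixes T :: "'a::{real_inner, complete_space} \<Rightarrow>\<^sub>L 'a" and x0 :: 'a
  assumes sa: "self_adjoint T" and nt: "x0 \<noteq> 0" and sp: "op_spectrum T \<subseteq> {a..b}"
    and f: "continuous_on {a..b} f" and g: "continuous_on {a..b} g"
  shows "cfc (\<lambda>t. f t * g t) T = cfc f T o\<^sub>L cfc g T"
proof -
  obtain P where P: "unif f {a..b} P" "(\<lambda>n. poly_op (P n) T) \<longlonglongrightarrow> cfc f T"
    using cfc_seq[OF sa nt sp f] by blast
  obtain Q where Q: "unif g {a..b} Q" "(\<lambda>n. poly_op (Q n) T) \<longlonglongrightarrow> cfc g T"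
    using cfc_seq[OF sa nt sp g] by blast
  obtain B1 where B1: "B1 \<ge> 0" "\<forall>t\<in>{a..b}. \<bar>f t\<bar> \<le> B1" using cont_bounded[OF f] by blast
  obtain B2 where B2: "B2 \<ge> 0" "\<forall>t\<in>{a..b}. \<bar>g t\<bar> \<le> B2" using cont_bounded[OF g] by blast
  have "unif (\<lambda>t. f t * g t) {a..b} (\<lambda>n. P n * Q n)"
    by (rule unif_mult[OF P(1) Q(1), of "max B1 B2"]) (use B1 B2 in \<open>force+\<close>)
  then have "unif (\<lambda>t. f t * g t) (op_spectrum T) (\<lambda>n. P n * Q n)"
    using sp by (rule unif_subset)
  then have 1: "(\<lambda>n. poly_op (P n * Q n) T) \<longlonglongrightarrow> cfc (\<lambda>t. f t * g t) T"
    by (rule cfc_limit[OF sa nt])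
  have 2: "(\<lambda>n. poly_op (P n * Q n) T) \<longlonglongrightarrow> (cfc f T o\<^sub>L cfc g T)"
    unfolding poly_op_mult
    by (rule bounded_bilinear.tendsto[OF bounded_bilinear_blinfun_compose P(2) Q(2)])
  show ?thesis using LIMSEQ_unique[OF 1 2] .
qed

lemma cfc_one:
  fixes T :: "'a::{real_inner, complete_space} \<Rightarrow>\<^sub>L 'a" and x0 :: 'a
  assumes sa: "self_adjoint T" and nt: "x0 \<noteq> 0"
  shows "cfc (\<lambda>t. 1) T = id_blinfun"
proof -
  have "unif (\<lambda>t. 1) (op_spectrum T) (\<lambda>n. 1)" unfolding unif_def by simp
  then have 1: "(\<lambda>n. poly_op 1 T) \<longlonglongrightarrow> cfc (\<lambda>t. 1) T" by (rule cfc_limit[OF sa nt])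
  have "poly_op 1 T = id_blinfun" by (simp add: one_pCons)
  then show ?thesis using 1 LIMSEQ_unique[OF 1] tendsto_const by metis
qed

lemma cfc_cong:
  assumes "\<And>t. t \<in> op_spectrum T \<Longrightarrow> f t = g t"
  shows "cfc f T = cfc g T"
proof -
  have "\<forall>p \<delta>. (\<forall>t\<in>op_spectrum T. \<bar>f t - poly p t\<bar> < \<delta>) = (\<forall>t\<in>op_spectrum T. \<bar>g t - poly p t\<bar> < \<delta>)"
    using assms by auto
  then show ?thesis unfolding cfc_def by simp
qed

lemma cfc_sa:
  fixes T :: "'a::{real_inner, complete_space} \<Rightarrow>\<^sub>L 'a" and x0 :: 'a
  assumes sa: "self_adjoint T" and nt: "x0 \<noteq> 0" and sp: "op_spectrum T \<subseteq> {a..b}"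
    and f: "continuous_on {a..b} f"
  shows "self_adjoint (cfc f T)"
  unfolding self_adjoint_def
proof (intro allI)
  fix x y
  obtain P where P: "unif f {a..b} P" "(\<lambda>n. poly_op (P n) T) \<longlonglongrightarrow> cfc f T"
    using cfc_seq[OF sa nt sp f] by blast
  have 1: "(\<lambda>n. inner (poly_op (P n) T x) y) \<longlonglongrightarrow> inner (cfc f T x) y"
    by (intro tendsto_intros P(2))
  have 2: "(\<lambda>n. inner x (poly_op (P n) T y)) \<longlonglongrightarrow> inner x (cfc f T y)"
    by (intro tendsto_intros P(2))
  have "(\<lambda>n. inner (poly_op (P n) T x) y) = (\<lambda>n. inner x (poly_op (P n) T y))"
    using sa_poly_op[OF sa] by (simp add: self_adjoint_def)
  then show "inner (cfc f T x) y = inner x (cfc f T y)" using 1 2 LIMSEQ_unique by metis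
qed

lemma cfc_pos:
  fixes T :: "'a::{real_inner, complete_space} \<Rightarrow>\<^sub>L 'a" and x0 :: 'a
  assumes sa: "self_adjoint T" and nt: "x0 \<noteq> 0" and sp: "op_spectrum T \<subseteq> {a..b}"
    and f: "continuous_on {a..b} f" and pos: "\<And>t. t \<in> op_spectrum T \<Longrightarrow> f t \<ge> 0"
  shows "inner (cfc f T x) x \<ge> 0"
proof -
  obtain P where P: "unif f {a..b} P" "(\<lambda>n. poly_op (P n) T) \<longlonglongrightarrow> cfc f T"
    using cfc_seq[OF sa nt sp f] by blast
  have uS: "unif f (op_spectrum T) P" using P(1) sp by (rule unif_subset)
  have 1: "(\<lambda>n. inner (poly_op (P n) T x) x) \<longlonglongrightarrow> inner (cfc f T x) x"
    by (intro tendsto_intros P(2))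
  have lb: "- d * (norm x)\<^sup>2 \<le> inner (cfc f T x) x" if d: "d > 0" for d
  proof (rule tendsto_lowerbound[OF 1])
    obtain N where N: "\<And>n t. n \<ge> N \<Longrightarrow> t \<in> op_spectrum T \<Longrightarrow> \<bar>f t - poly (P n) t\<bar> < d"
      using unif_D[OF uS d] by blast
    show "eventually (\<lambda>n. - d * (norm x)\<^sup>2 \<le> inner (poly_op (P n) T x) x) sequentially"
      unfolding eventually_sequentially
    proof (intro exI[of _ N] allI impI)
      fix n assume n: "N \<le> n"
      obtain t where t: "t \<in> op_spectrum T" "\<forall>x. poly (P n) t * (norm x)\<^sup>2 \<le> inner (poly_op (P n) T x) x"
        using poly_op_lower[OF sa nt] by blast
      have "poly (P n) t \<ge> - d" using N[OF n t(1)] pos[OF t(1)] by linarith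
      then have "- d * (norm x)\<^sup>2 \<le> poly (P n) t * (norm x)\<^sup>2" by (intro mult_right_mono) auto
      then show "- d * (norm x)\<^sup>2 \<le> inner (poly_op (P n) T x) x" using t(2) by (meson order_trans)
    qed
  qed simp
  show ?thesis
  proof (rule ccontr)
    assume neg: "\<not> ?thesis"
    define v where "v = inner (cfc f T x) x"
    have v: "v < 0" using neg by (simp add: v_def)
    define d where "d = - v / (2 * ((norm x)\<^sup>2 + 1))"
    have den: "2 * ((norm x)\<^sup>2 + 1) > 0" by (simp add: add_nonneg_pos)
    have d: "d > 0" unfolding d_def using v den by (intro divide_pos_pos) auto
    have "- d * (norm x)\<^sup>2 \<le> v" using lb[OF d] by (simp add: v_def)
    moreover have "d * (norm x)\<^sup>2 < - v"
    proof -
      have "d * (norm x)\<^sup>2 \<le> d * ((norm x)\<^sup>2 + 1)" using d by simp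
      also have "\<dots> = - v / 2" unfolding d_def using den by (simp add: field_simps)
      also have "\<dots> < - v" using v by simp
      finally show ?thesis .
    qed
    ultimately show False by linarith
  qed
qed


lemma sp_bounds:
  fixes A :: "'a::{real_inner, complete_space} \<Rightarrow>\<^sub>L 'a" and x0 :: 'a
  assumes A: "strictly_positive A" and nt: "x0 \<noteq> 0"
  shows "\<exists>m>0. op_spectrum A \<subseteq> {m..norm A} \<and> (\<forall>x. m * (norm x)\<^sup>2 \<le> inner (A x) x)"
proof -
  have sa: "self_adjoint A" and pos: "\<And>x. inner (A x) x \<ge> 0" and inv: "op_invertible A"
    using A by (auto simp: strictly_positive_def)
  obtain l where l: "l \<in> op_spectrum A" "\<forall>x. l * (norm x)\<^sup>2 \<le> inner (A x) x"
    using sa_spec_min[OF sa nt] by blast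
  have "l \<noteq> 0" using l(1) inv by (auto simp: op_spectrum_def)
  moreover have "\<not> l < 0"
  proof
    assume ln: "l < 0"
    have sa': "self_adjoint (A - l *\<^sub>R id_blinfun)"
      using sa by (simp add: self_adjoint_def blinfun.bilinear_simps inner_diff_left inner_diff_right)
    have "(- l) * (norm x)\<^sup>2 \<le> inner ((A - l *\<^sub>R id_blinfun) x) x" for x
      using pos[of x] by (simp add: blinfun.bilinear_simps inner_diff_left power2_norm_eq_inner)
    moreover have m: "- l > 0" using ln by simp
    ultimately have "op_invertible (A - l *\<^sub>R id_blinfun)" using sa_posdef_invertible[OF sa' m] by blast
    then show False using l(1) by (simp add: op_spectrum_def)
  qed
  ultimately have l0: "l > 0" by simp
  have up: "inner (A x) x \<le> norm A * (norm x)\<^sup>2" for x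
  proof -
    have "inner (A x) x \<le> norm (A x) * norm x" by (rule norm_cauchy_schwarz)
    also have "\<dots> \<le> norm A * norm x * norm x" by (simp add: mult_right_mono norm_blinfun)
    finally show ?thesis by (simp add: power2_eq_square mult.assoc)
  qed
  have "op_spectrum A \<subseteq> {l..norm A}"
    by (rule sa_spectrum_subset[OF sa]) (use l(2) up in auto)
  then show ?thesis using l0 l(2) by blast
qed

lemma sandwich_le:
  fixes P F G :: "'a::real_inner \<Rightarrow>\<^sub>L 'a"
  assumes sa: "self_adjoint P" and pos: "\<And>y. inner ((G - F) y) y \<ge> 0"
  shows "op_le (P o\<^sub>L F o\<^sub>L P) (P o\<^sub>L G o\<^sub>L P)"
  unfolding op_le_def
proof
  fix x
  have "((P o\<^sub>L G o\<^sub>L P) - (P o\<^sub>L F o\<^sub>L P)) x = P ((G - F) (P x))"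
    by (simp only: blinfun.diff_left blinfun.diff_right blinfun_apply_blinfun_compose)
  then have "inner (((P o\<^sub>L G o\<^sub>L P) - (P o\<^sub>L F o\<^sub>L P)) x) x = inner (P ((G - F) (P x))) x"
    by simp
  also have "\<dots> = inner ((G - F) (P x)) (P x)" using sa by (simp add: self_adjoint_def)
  finally show "inner (((P o\<^sub>L G o\<^sub>L P) - (P o\<^sub>L F o\<^sub>L P)) x) x \<ge> 0" using pos by simp
qed

lemma cfc_le:
  fixes C :: "'a::{real_inner, complete_space} \<Rightarrow>\<^sub>L 'a" and x0 :: 'a
  assumes sa: "self_adjoint C" and nt: "x0 \<noteq> 0" and sp: "op_spectrum C \<subseteq> {a..b}"
    and f: "continuous_on {a..b} f" and g: "continuous_on {a..b} g"
    and le: "\<And>t. t \<in> {a..b} \<Longrightarrow> f t \<le> g t"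
  shows "inner ((cfc g C - cfc f C) y) y \<ge> 0"
proof -
  have "cfc (\<lambda>t. 1 * g t + (-1) * f t) C = 1 *\<^sub>R cfc g C + (-1) *\<^sub>R cfc f C"
    by (rule cfc_lin[OF sa nt sp g f])
  then have e: "cfc g C - cfc f C = cfc (\<lambda>t. 1 * g t + (-1) * f t) C" by simp
  have c: "continuous_on {a..b} (\<lambda>t. 1 * g t + (-1) * f t)" by (intro continuous_intros f g)
  show ?thesis unfolding e
    by (rule cfc_pos[OF sa nt sp c]) (use le sp in force)
qed

lemma scalar_ineq:
  fixes t l \<beta> :: real
  assumes t: "t > 0" and l: "l > 0"
  shows "t powr \<beta> * ln t \<le> t powr \<beta> * ((t powr l - 1) / l)"
    and "t powr \<beta> * ((t powr l - 1) / l) \<le> t powr (\<beta> + l) * ln t"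
proof -
  define y where "y = t powr l"
  have y: "y > 0" using t by (simp add: y_def)
  have ly: "ln y = l * ln t" using t by (simp add: y_def)
  have h1: "l * ln t \<le> y - 1" using ln_le_minus_one[OF y] ly by simp
  have "ln (inverse y) \<le> inverse y - 1" using y by (intro ln_le_minus_one) simp
  then have "- (l * ln t) \<le> inverse y - 1" using y ly by (simp add: ln_inverse)
  then have "y * (- (l * ln t)) \<le> y * (inverse y - 1)" using y by (intro mult_left_mono) auto
  then have h2: "y - 1 \<le> y * (l * ln t)" using y by (simp add: algebra_simps)
  have tb: "t powr \<beta> > 0" using t by simp
  have a1: "ln t \<le> (y - 1) / l" using h1 l by (simp add: pos_le_divide_eq mult.commute)
  have a2: "(y - 1) / l \<le> y * ln t" using h2 l by (simp add: pos_divide_le_eq algebra_simps)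
  show "t powr \<beta> * ln t \<le> t powr \<beta> * ((t powr l - 1) / l)"
    using mult_left_mono[OF a1, of "t powr \<beta>"] tb by (simp add: y_def)
  have "t powr \<beta> * ((t powr l - 1) / l) \<le> t powr \<beta> * (y * ln t)"
    using mult_left_mono[OF a2, of "t powr \<beta>"] tb by (simp add: y_def)
  also have "\<dots> = t powr (\<beta> + l) * ln t" by (simp add: y_def powr_add)
  finally show "t powr \<beta> * ((t powr l - 1) / l) \<le> t powr (\<beta> + l) * ln t" .
qed


lemma ts_neg:
  fixes t l \<mu> :: real and k :: nat
  assumes t: "t > 0" and l: "l > 0"
  shows "(1 / (- l)) * t powr (\<mu> + real_of_int (int k + 1) * (- l))
       + (- (1 / (- l))) * t powr (\<mu> + real_of_int (int k + 1 - 1) * (- l))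
       = t powr (\<mu> - (real k + 1) * l) * ((t powr l - 1) / l)"
proof -
  define \<beta> where "\<beta> = \<mu> - (real k + 1) * l"
  have e1: "\<mu> + real_of_int (int k + 1) * (- l) = \<beta>" by (simp add: \<beta>_def algebra_simps)
  have e2: "\<mu> + real_of_int (int k + 1 - 1) * (- l) = \<beta> + l" by (simp add: \<beta>_def algebra_simps)
  show ?thesis unfolding e1 e2 \<beta>_def[symmetric] using l by (simp add: powr_add field_simps)
qed

lemma ts_pos:
  fixes t l \<mu> :: real and k :: nat
  assumes t: "t > 0" and l: "l > 0"
  shows "(1 / l) * t powr (\<mu> + real_of_int (int k + 1) * l)
       + (- (1 / l)) * t powr (\<mu> + real_of_int (int k + 1 - 1) * l)
       = t powr (\<mu> + real k * l) * ((t powr l - 1) / l)"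
proof -
  define \<beta> where "\<beta> = \<mu> + real k * l"
  have e1: "\<mu> + real_of_int (int k + 1) * l = \<beta> + l" by (simp add: \<beta>_def algebra_simps)
  have e2: "\<mu> + real_of_int (int k + 1 - 1) * l = \<beta>" by (simp add: \<beta>_def algebra_simps)
  show ?thesis unfolding e1 e2 \<beta>_def[symmetric] using l by (simp add: powr_add field_simps)
qed

theorem proposition3:
  fixes A B :: "'a::{real_inner, complete_space} \<Rightarrow>\<^sub>L 'a"
    and l \<mu> :: real and k :: nat
  assumes "strictly_positive A" and "strictly_positive B" and "l > 0"
  shows "op_le (rel_entropy (\<mu> - (real k + 1) * l) A B) (tsallis \<mu> (int k + 1) (- l) A B)
       \<and> op_le (tsallis \<mu> (int k + 1) (- l) A B) (rel_entropy (\<mu> - real k * l) A B)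
       \<and> op_le (rel_entropy (\<mu> + real k * l) A B) (tsallis \<mu> (int k + 1) l A B)
       \<and> op_le (tsallis \<mu> (int k + 1) l A B) (rel_entropy (\<mu> + (real k + 1) * l) A B)"
proof (cases "\<exists>x0::'a. x0 \<noteq> 0")
  case False
  then have z: "\<And>x::'a. x = 0" by auto
  have "op_le X Y" for X Y :: "'a \<Rightarrow>\<^sub>L 'a"
    unfolding op_le_def
  proof
    fix x :: 'a
    show "inner ((Y - X) x) x \<ge> 0" using z[of x] by simp
  qed
  then show ?thesis by blast
next
  case True
  then obtain x0 :: 'a where nt: "x0 \<noteq> 0" by blast
  have saA: "self_adjoint A" and saB: "self_adjoint B"
    using assms by (auto simp: strictly_positive_def)
  have l: "l > 0" by (rule assms(3))
  obtain mA where mA: "mA > 0" "op_spectrum A \<subseteq> {mA..norm A}"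
    using sp_bounds[OF assms(1) nt] by blast
  obtain mB where mB: "mB > 0" "\<And>x. mB * (norm x)\<^sup>2 \<le> inner (B x) x"
    using sp_bounds[OF assms(2) nt] by blast
  have contA: "continuous_on {mA..norm A} (\<lambda>t. t powr \<nu>)" for \<nu>
    using mA(1) by (intro continuous_intros) auto
  define Ah where "Ah = op_powr A (1/2)"
  define Ahi where "Ahi = op_powr A (-1/2)"
  have saAh: "self_adjoint Ah" unfolding Ah_def op_powr_def by (rule cfc_sa[OF saA nt mA(2) contA])
  have saAhi: "self_adjoint Ahi" unfolding Ahi_def op_powr_def by (rule cfc_sa[OF saA nt mA(2) contA])
  have one: "cfc (\<lambda>t. t powr \<alpha> * t powr (- \<alpha>)) A = id_blinfun" for \<alpha>
  proof -
    have "cfc (\<lambda>t. t powr \<alpha> * t powr (- \<alpha>)) A = cfc (\<lambda>t. 1) A"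
    proof (rule cfc_cong)
      fix t assume "t \<in> op_spectrum A"
      then have "t > 0" using mA by force
      then show "t powr \<alpha> * t powr (- \<alpha>) = 1" by (simp add: powr_add[symmetric])
    qed
    then show ?thesis using cfc_one[OF saA nt] by simp
  qed
  have AhAhi: "Ah o\<^sub>L Ahi = id_blinfun"
    using cfc_mult[OF saA nt mA(2) contA contA, of "1/2" "-1/2"] one[of "1/2"]
    by (simp add: Ah_def Ahi_def op_powr_def)
  have AhiAh: "Ahi o\<^sub>L Ah = id_blinfun"
    using cfc_mult[OF saA nt mA(2) contA contA, of "-1/2" "1/2"] one[of "-1/2"]
    by (simp add: Ah_def Ahi_def op_powr_def)
  define C where "C = Ahi o\<^sub>L B o\<^sub>L Ahi"
  have saC: "self_adjoint C"
    unfolding self_adjoint_def C_def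
    using saAhi saB by (simp add: self_adjoint_def)
  define kk where "kk = norm Ah"
  have xle: "norm x \<le> kk * norm (Ahi x)" for x
  proof -
    have "x = Ah (Ahi x)" using AhAhi by (metis blinfun_apply_blinfun_compose blinfun_apply_id_blinfun)
    then have "norm x = norm (Ah (Ahi x))" by simp
    also have "\<dots> \<le> kk * norm (Ahi x)" unfolding kk_def by (rule norm_blinfun)
    finally show ?thesis .
  qed
  have kk: "kk > 0"
  proof -
    have "norm x0 \<le> kk * norm (Ahi x0)" by (rule xle)
    moreover have "norm x0 > 0" using nt by simp
    moreover have "kk \<ge> 0" by (simp add: kk_def)
    ultimately show ?thesis by (metis le_less mult_eq_0_iff not_le)
  qed
  define mC where "mC = mB / kk\<^sup>2"
  have mC: "mC > 0" using mB(1) kk by (simp add: mC_def)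
  have Cx: "inner (C x) x = inner (B (Ahi x)) (Ahi x)" for x
    unfolding C_def using saAhi by (simp add: self_adjoint_def)
  have Clow: "mC * (norm x)\<^sup>2 \<le> inner (C x) x" for x
  proof -
    have "(norm x)\<^sup>2 \<le> kk\<^sup>2 * (norm (Ahi x))\<^sup>2"
      using xle[of x] by (metis norm_ge_zero power_mono power_mult_distrib)
    then have "mC * (norm x)\<^sup>2 \<le> mC * (kk\<^sup>2 * (norm (Ahi x))\<^sup>2)"
      using mC by (intro mult_left_mono) auto
    also have "\<dots> = mB * (norm (Ahi x))\<^sup>2" using kk by (simp add: mC_def)
    also have "\<dots> \<le> inner (C x) x" unfolding Cx by (rule mB(2))
    finally show ?thesis .
  qed
  have Cup: "inner (C x) x \<le> norm C * (norm x)\<^sup>2" for x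
  proof -
    have "inner (C x) x \<le> norm (C x) * norm x" by (rule norm_cauchy_schwarz)
    also have "\<dots> \<le> norm C * norm x * norm x" by (simp add: mult_right_mono norm_blinfun)
    finally show ?thesis by (simp add: power2_eq_square mult.assoc)
  qed
  have spC: "op_spectrum C \<subseteq> {mC..norm C}"
    by (rule sa_spectrum_subset[OF saC Clow Cup])
  have pos: "t > 0" if "t \<in> {mC..norm C}" for t using that mC by auto
  have cpow: "continuous_on {mC..norm C} (\<lambda>t. t powr \<nu>)" for \<nu>
    using mC by (intro continuous_intros) auto
  have cln: "continuous_on {mC..norm C} ln"
    using mC by (intro continuous_intros) auto
  have cent: "continuous_on {mC..norm C} (\<lambda>t. t powr \<nu> * ln t)" for \<nu>
    using mC by (intro continuous_intros) auto
  have cts: "continuous_on {mC..norm C} (\<lambda>t. c * t powr \<alpha> + d * t powr \<beta>)" for c d \<alpha> \<beta>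
    using mC by (intro continuous_intros) auto
  have RE: "rel_entropy \<nu> A B = Ah o\<^sub>L cfc (\<lambda>t. t powr \<nu> * ln t) C o\<^sub>L Ah" for \<nu>
  proof -
    have "rel_entropy \<nu> A B = Ah o\<^sub>L op_powr C \<nu> o\<^sub>L op_log C o\<^sub>L Ah"
      by (simp add: rel_entropy_def Let_def Ah_def Ahi_def C_def)
    also have "\<dots> = Ah o\<^sub>L (op_powr C \<nu> o\<^sub>L op_log C) o\<^sub>L Ah" by (simp add: bl_compose_assoc)
    also have "op_powr C \<nu> o\<^sub>L op_log C = cfc (\<lambda>t. t powr \<nu> * ln t) C"
      unfolding op_powr_def op_log_def
      by (rule cfc_mult[OF saC nt spC cpow cln, symmetric])
    finally show ?thesis .
  qed
  have TS: "tsallis \<mu>' k' l' A B = Ah o\<^sub>L cfc (\<lambda>t. (1 / l') * t powr (\<mu>' + of_int k' * l')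
      + (- (1 / l')) * t powr (\<mu>' + of_int (k' - 1) * l')) C o\<^sub>L Ah" for \<mu>' k' l'
  proof -
    have "cfc (\<lambda>t. (1 / l') * t powr (\<mu>' + of_int k' * l') + (- (1 / l')) * t powr (\<mu>' + of_int (k' - 1) * l')) C
       = (1 / l') *\<^sub>R op_powr C (\<mu>' + of_int k' * l') + (- (1 / l')) *\<^sub>R op_powr C (\<mu>' + of_int (k' - 1) * l')"
      unfolding op_powr_def by (rule cfc_lin[OF saC nt spC cpow cpow])
    then have eq: "cfc (\<lambda>t. (1 / l') * t powr (\<mu>' + of_int k' * l') + (- (1 / l')) * t powr (\<mu>' + of_int (k' - 1) * l')) C
       = (1 / l') *\<^sub>R op_powr C (\<mu>' + of_int k' * l') + (- (1 / l')) *\<^sub>R op_powr C (\<mu>' + of_int (k' - 1) * l')" .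
    have "tsallis \<mu>' k' l' A B = (1 / l') *\<^sub>R ((Ah o\<^sub>L op_powr C (\<mu>' + of_int k' * l') o\<^sub>L Ah)
        - (Ah o\<^sub>L op_powr C (\<mu>' + of_int (k' - 1) * l') o\<^sub>L Ah))"
      unfolding tsallis_def wmean_def Let_def Ah_def[symmetric] Ahi_def[symmetric] C_def[symmetric] ..
    also have "\<dots> = Ah o\<^sub>L ((1 / l') *\<^sub>R op_powr C (\<mu>' + of_int k' * l') + (- (1 / l')) *\<^sub>R op_powr C (\<mu>' + of_int (k' - 1) * l')) o\<^sub>L Ah"
      by (simp add: blc scaleR_diff_right)
    finally show ?thesis unfolding eq .
  qed
  have gen: "op_le (Ah o\<^sub>L cfc f C o\<^sub>L Ah) (Ah o\<^sub>L cfc g C o\<^sub>L Ah)"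
    if f: "continuous_on {mC..norm C} f" and g: "continuous_on {mC..norm C} g"
      and le: "\<And>t. t > 0 \<Longrightarrow> f t \<le> g t" for f g
    by (rule sandwich_le[OF saAh cfc_le[OF saC nt spC f g]]) (use le pos in blast)
  have i1: "op_le (rel_entropy (\<mu> - (real k + 1) * l) A B) (tsallis \<mu> (int k + 1) (- l) A B)"
    unfolding RE TS
  proof (rule gen[OF cent cts])
    fix t :: real assume t: "t > 0"
    show "t powr (\<mu> - (real k + 1) * l) * ln t \<le> (1 / - l) * t powr (\<mu> + real_of_int (int k + 1) * - l) +
          - (1 / - l) * t powr (\<mu> + real_of_int (int k + 1 - 1) * - l)"
      unfolding ts_neg[OF t l] by (rule scalar_ineq(1)[OF t l])
  qed
  have i2: "op_le (tsallis \<mu> (int k + 1) (- l) A B) (rel_entropy (\<mu> - real k * l) A B)"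
    unfolding RE TS
  proof (rule gen[OF cts cent])
    fix t :: real assume t: "t > 0"
    have e: "\<mu> - real k * l = (\<mu> - (real k + 1) * l) + l" by (simp add: algebra_simps)
    show "(1 / - l) * t powr (\<mu> + real_of_int (int k + 1) * - l) +
          - (1 / - l) * t powr (\<mu> + real_of_int (int k + 1 - 1) * - l) \<le> t powr (\<mu> - real k * l) * ln t"
      unfolding ts_neg[OF t l] e by (rule scalar_ineq(2)[OF t l])
  qed
  have i3: "op_le (rel_entropy (\<mu> + real k * l) A B) (tsallis \<mu> (int k + 1) l A B)"
    unfolding RE TS
  proof (rule gen[OF cent cts])
    fix t :: real assume t: "t > 0"
    show "t powr (\<mu> + real k * l) * ln t \<le> (1 / l) * t powr (\<mu> + real_of_int (int k + 1) * l) +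
          - (1 / l) * t powr (\<mu> + real_of_int (int k + 1 - 1) * l)"
      unfolding ts_pos[OF t l] by (rule scalar_ineq(1)[OF t l])
  qed
  have i4: "op_le (tsallis \<mu> (int k + 1) l A B) (rel_entropy (\<mu> + (real k + 1) * l) A B)"
    unfolding RE TS
  proof (rule gen[OF cts cent])
    fix t :: real assume t: "t > 0"
    have e: "\<mu> + (real k + 1) * l = (\<mu> + real k * l) + l" by (simp add: algebra_simps)
    show "(1 / l) * t powr (\<mu> + real_of_int (int k + 1) * l) +
          - (1 / l) * t powr (\<mu> + real_of_int (int k + 1 - 1) * l) \<le> t powr (\<mu> + (real k + 1) * l) * ln t"
      unfolding ts_pos[OF t l] e by (rule scalar_ineq(2)[OF t l])
  qed
  show ?thesis using i1 i2 i3 i4 by blast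
qed

end
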